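(* Let $f=f_{\mathbb U}(z)=\sum_{n\ge0}a_nz^n$ with $\{a_n\}$ i.i.d. standard complex Gaussians, and let $z_1,\ldots,z_n\in\mathbb U$. Then the random function $z\mapsto T_{z_1}(z)\cdots T_{z_n}(z)f(z)$ has the same distribution as the conditional distribution of $f$ given $f(z_1)=\cdots=f(z_n)=0$.
   Context: $\mathbb U$ is the unit disk; a standard complex Gaussian has density $e^{-z\overline z}/\pi$. For $\beta\in\mathbb U$, $T_\beta(z)=\frac{z-\beta}{1-\overline\beta z}$. Conditioning is Gaussian conditioning: the conditional law of the jointly Gaussian mean zero process $f$ given $(f(z_1),\ldots,f(z_n))=0$ is the law of the process obtained by projecting each $f(z)$ (in $L^2(\mathbf P)$) onto the orthocomplement of the span of $f(z_1),\ldots,f(z_n)$. *)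

theory Defs
  imports "HOL-Probability.Probability"
begin

definition unit_disk :: "complex set" where
  "unit_disk = ball 0 1"

definition std_cgauss_density :: "complex \<Rightarrow> ennreal" where
  "std_cgauss_density z = ennreal (exp (- (norm z * norm z)) / pi)"

definition blaschke :: "complex \<Rightarrow> complex \<Rightarrow> complex" where
  "blaschke \<beta> z = (z - \<beta>) / (1 - cnj \<beta> * z)"

definition GAF :: "(nat \<Rightarrow> 'a \<Rightarrow> complex) \<Rightarrow> 'a \<Rightarrow> complex \<Rightarrow> complex" where
  "GAF a \<omega> z = (\<Sum>k. a k \<omega> * z ^ k)"

definition L2_inner :: "'a measure \<Rightarrow> ('a \<Rightarrow> complex) \<Rightarrow> ('a \<Rightarrow> complex) \<Rightarrow> complex" where
  "L2_inner M X Y = integral\<^sup>L M (\<lambda>\<omega>. X \<omega> * cnj (Y \<omega>))"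

text \<open>g is the process obtained by projecting each F(z) onto the orthocomplement of
  span{F(zs 0),...,F(zs (n-1))} in L^2(P): g(z) is measurable, g(z) = F(z) - (element of
  the span) almost surely, and g(z) is orthogonal to every F(zs k).\<close>
definition conditioned_process ::
  "'a measure \<Rightarrow> ('a \<Rightarrow> complex \<Rightarrow> complex) \<Rightarrow> (nat \<Rightarrow> complex) \<Rightarrow> nat
     \<Rightarrow> ('a \<Rightarrow> complex \<Rightarrow> complex) \<Rightarrow> bool" where
  "conditioned_process M F zs n g \<longleftrightarrow>
     (\<forall>z\<in>unit_disk.
        (\<lambda>\<omega>. g \<omega> z) \<in> borel_measurable M \<and>
        (\<exists>c :: nat \<Rightarrow> complex.
           (AE \<omega> in M. g \<omega> z = F \<omega> z - (\<Sum>j<n. c j * F \<omega> (zs j)))) \<and>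
        (\<forall>k<n. L2_inner M (\<lambda>\<omega>. g \<omega> z) (\<lambda>\<omega>. F \<omega> (zs k)) = 0))"

end

theory Submission
  imports Defs
begin

lemma fm_char_unique:
  fixes L1 L2 :: "real measure"
  assumes fin: "finite_measure L1" "finite_measure L2"
    and sets: "sets L1 = sets borel" "sets L2 = sets borel"
    and ch: "\<And>t. (CLINT x|L1. cis (t * x)) = (CLINT x|L2. cis (t * x))"
  shows "L1 = L2"
proof -
  interpret F1: finite_measure L1 by fact
  interpret F2: finite_measure L2 by fact
  have sp: "space L1 = UNIV" "space L2 = UNIV"
    using sets_eq_imp_space_eq[OF sets(1)] sets_eq_imp_space_eq[OF sets(2)] by auto
  have "complex_of_real (measure L1 UNIV) = complex_of_real (measure L2 UNIV)"
    using ch[of 0] sp by (simp add: lebesgue_integral_const)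
  then have m2: "measure L2 UNIV = measure L1 UNIV" by simp
  define m where "m = measure L1 UNIV"
  show ?thesis
  proof (cases "m = 0")
    case True
    have z1: "emeasure L1 UNIV = 0" using True F1.emeasure_eq_measure sp m_def by simp
    have z2: "emeasure L2 UNIV = 0" using True m2 F2.emeasure_eq_measure sp m_def by simp
    show ?thesis
    proof (rule measure_eqI)
      show "sets L1 = sets L2" using sets by simp
      fix A assume A: "A \<in> sets L1"
      have "emeasure L1 A \<le> emeasure L1 UNIV" using sp A by (metis emeasure_space)
      moreover have "emeasure L2 A \<le> emeasure L2 UNIV" using sp A sets by (metis emeasure_space)
      ultimately show "emeasure L1 A = emeasure L2 A" using z1 z2 by simp
    qed
  next
    case False
    then have mpos: "m > 0" using measure_nonneg[of L1 UNIV] m_def by linarith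
    define D1 where "D1 = density L1 (\<lambda>_. ennreal (1/m))"
    define D2 where "D2 = density L2 (\<lambda>_. ennreal (1/m))"
    have rd1: "real_distribution D1"
    proof -
      have "emeasure D1 (space D1) = ennreal (1/m) * emeasure L1 UNIV"
        unfolding D1_def using sp sets.top[of L1] by (simp add: emeasure_density)
      also have "\<dots> = 1" using F1.emeasure_eq_measure m_def mpos
        by (simp add: ennreal_mult''[symmetric])
      finally have "prob_space D1" by (rule prob_spaceI)
      then show ?thesis unfolding real_distribution_def real_distribution_axioms_def D1_def
        using sets by simp
    qed
    have rd2: "real_distribution D2"
    proof -
      have "emeasure D2 (space D2) = ennreal (1/m) * emeasure L2 UNIV"
        unfolding D2_def using sp sets.top[of L2] by (simp add: emeasure_density)
      also have "\<dots> = 1" using F2.emeasure_eq_measure m_def mpos m2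
        by (simp add: ennreal_mult''[symmetric])
      finally have "prob_space D2" by (rule prob_spaceI)
      then show ?thesis unfolding real_distribution_def real_distribution_axioms_def D2_def
        using sets by simp
    qed
    have "char D1 = char D2"
    proof
      fix t
      have "char D1 t = (1/m) *\<^sub>R (CLINT x|L1. cis (t * x))"
        unfolding char_def D1_def using mpos sets
        by (subst integral_density) (auto simp: cis_conv_exp)
      also have "\<dots> = (1/m) *\<^sub>R (CLINT x|L2. cis (t * x))" using ch by simp
      also have "\<dots> = char D2 t"
        unfolding char_def D2_def using mpos sets
        by (subst integral_density) (auto simp: cis_conv_exp)
      finally show "char D1 t = char D2 t" .
    qed
    then have D: "D1 = D2" using Levy_uniqueness rd1 rd2 by blast
    have "L1 = density D1 (\<lambda>_. ennreal m)"
      unfolding D1_def using mpos sets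
      by (subst density_density_eq) (auto simp: ennreal_mult''[symmetric] density_1)
    also have "\<dots> = density D2 (\<lambda>_. ennreal m)" using D by simp
    also have "\<dots> = L2"
      unfolding D2_def using mpos sets
      by (subst density_density_eq) (auto simp: ennreal_mult''[symmetric] density_1)
    finally show ?thesis .
  qed
qed

lemma borel_measurable_cis[measurable]:
  "f \<in> borel_measurable M \<Longrightarrow> (\<lambda>x. cis (f x)) \<in> borel_measurable M"
  unfolding cis_conv_exp by measurable

lemma finite_measure_density_bounded:
  assumes "finite_measure M" "f \<in> borel_measurable M" "\<And>x. f x \<le> ennreal C"
  shows "finite_measure (density M f)"
proof (rule finite_measureI)
  interpret finite_measure M by fact
  have e1: "emeasure (density M f) (space (density M f)) = (\<integral>\<^sup>+x. f x \<partial>M)"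
    using assms by (simp add: emeasure_density)
  have e2: "(\<integral>\<^sup>+x. f x \<partial>M) \<le> (\<integral>\<^sup>+x. ennreal C \<partial>M)" by (intro nn_integral_mono assms)
  have "emeasure M (space M) < \<top>" using emeasure_finite[of "space M"] by (simp add: less_top[symmetric])
  then have e3: "(\<integral>\<^sup>+x. ennreal C \<partial>M) < \<infinity>" by (simp add: nn_integral_const ennreal_mult_less_top)
  from e2 e3 have "(\<integral>\<^sup>+x. f x \<partial>M) < \<infinity>" by (rule le_less_trans)
  then show "emeasure (density M f) (space (density M f)) \<noteq> \<infinity>" using e1 by simp
qed

lemma step_D:
  fixes \<mu> \<nu> :: "'a measure" and Z :: "'a \<Rightarrow> real" and h :: "'a \<Rightarrow> real"
  assumes fin: "finite_measure \<mu>" "finite_measure \<nu>" and sets: "sets \<nu> = sets \<mu>"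
    and Z: "Z \<in> borel_measurable \<mu>" and h: "h \<in> borel_measurable \<mu>" and hb: "\<And>y. \<bar>h y\<bar> \<le> 1"
    and e0: "\<And>t. (CLINT y|\<mu>. cis (t * Z y)) = (CLINT y|\<nu>. cis (t * Z y))"
    and eh: "\<And>t. (CLINT y|\<mu>. cis (t * Z y) * h y) = (CLINT y|\<nu>. cis (t * Z y) * h y)"
    and S: "S \<in> sets borel"
  shows "(LINT y|\<mu>. indicator S (Z y) * h y) = (LINT y|\<nu>. indicator S (Z y) * h y)"
proof -
  interpret F1: finite_measure \<mu> by fact
  interpret F2: finite_measure \<nu> by fact
  have Z2: "Z \<in> borel_measurable \<nu>" using Z by (subst measurable_cong_sets[OF sets refl])
  have h2: "h \<in> borel_measurable \<nu>" using h by (subst measurable_cong_sets[OF sets refl])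
  have hn: "\<And>y. 0 \<le> h y + 1" using hb by (smt (verit))
  have hle: "\<And>y. ennreal (h y + 1) \<le> ennreal 2"
  proof -
    fix y have "h y + 1 \<le> 2" using hb[of y] by (simp add: abs_le_iff)
    then show "ennreal (h y + 1) \<le> ennreal 2" by (rule ennreal_leI)
  qed
  have int1: "integrable M (\<lambda>y. cis (t * Z' y) * complex_of_real (h' y))"
    if "finite_measure M" "Z' \<in> borel_measurable M" "h' \<in> borel_measurable M" "\<And>y. \<bar>h' y\<bar> \<le> 1"
    for M Z' t and h' :: "_ \<Rightarrow> real"
    using that by (intro finite_measure.integrable_const_bound[where B=1]) (auto simp: norm_mult, measurable)
  have int2: "integrable M (\<lambda>y. cis (t * Z' y))"
    if "finite_measure M" "Z' \<in> borel_measurable M" for M Z' t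
    using that by (intro finite_measure.integrable_const_bound[where B=1]) (auto, measurable)
  have int3: "integrable M (\<lambda>y. indicator S (Z' y) * h' y)"
    if "finite_measure M" "Z' \<in> borel_measurable M" "h' \<in> borel_measurable M" "\<And>y. \<bar>h' y\<bar> \<le> 1"
    for M Z' and h' :: "_ \<Rightarrow> real"
    using that S by (auto intro!: finite_measure.integrable_const_bound[where B=1] simp: indicator_def)
  have int4: "integrable M (\<lambda>y. indicator S (Z' y) :: real)"
    if "finite_measure M" "Z' \<in> borel_measurable M" for M Z'
    using that S by (auto intro!: finite_measure.integrable_const_bound[where B=1] simp: indicator_def)
  have L0: "distr \<mu> borel Z = distr \<nu> borel Z"
  proof (rule fm_char_unique)
    show "finite_measure (distr \<mu> borel Z)" "finite_measure (distr \<nu> borel Z)"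
      using Z Z2 by (auto intro!: finite_measure.finite_measure_distr fin)
    fix t show "(CLINT x|distr \<mu> borel Z. cis (t * x)) = (CLINT x|distr \<nu> borel Z. cis (t * x))"
      using Z Z2 e0 by (simp add: integral_distr)
  qed simp_all
  define D1 where "D1 = distr (density \<mu> (\<lambda>y. ennreal (h y + 1))) borel Z"
  define D2 where "D2 = distr (density \<nu> (\<lambda>y. ennreal (h y + 1))) borel Z"
  have cD1: "(CLINT x|D1. cis (t * x)) = (CLINT y|\<mu>. cis (t * Z y) * h y) + (CLINT y|\<mu>. cis (t * Z y))" for t
  proof -
    have "(CLINT x|D1. cis (t * x)) = (CLINT y|\<mu>. (h y + 1) *\<^sub>R cis (t * Z y))"
      unfolding D1_def using Z h hn by (simp add: integral_distr integral_density)
    also have "\<dots> = (CLINT y|\<mu>. cis (t * Z y) * h y + cis (t * Z y))"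
      by (intro Bochner_Integration.integral_cong) (auto simp: scaleR_conv_of_real algebra_simps)
    also have "\<dots> = (CLINT y|\<mu>. cis (t * Z y) * h y) + (CLINT y|\<mu>. cis (t * Z y))"
      by (intro Bochner_Integration.integral_add int1 int2 fin Z h hb)
    finally show ?thesis .
  qed
  have cD2: "(CLINT x|D2. cis (t * x)) = (CLINT y|\<nu>. cis (t * Z y) * h y) + (CLINT y|\<nu>. cis (t * Z y))" for t
  proof -
    have "(CLINT x|D2. cis (t * x)) = (CLINT y|\<nu>. (h y + 1) *\<^sub>R cis (t * Z y))"
      unfolding D2_def using Z2 h2 hn by (simp add: integral_distr integral_density)
    also have "\<dots> = (CLINT y|\<nu>. cis (t * Z y) * h y + cis (t * Z y))"
      by (intro Bochner_Integration.integral_cong) (auto simp: scaleR_conv_of_real algebra_simps)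
    also have "\<dots> = (CLINT y|\<nu>. cis (t * Z y) * h y) + (CLINT y|\<nu>. cis (t * Z y))"
      by (intro Bochner_Integration.integral_add int1 int2 fin Z2 h2 hb)
    finally show ?thesis .
  qed
  have D: "D1 = D2"
  proof (rule fm_char_unique)
    show "finite_measure D1" unfolding D1_def
      using Z h hle by (auto intro!: finite_measure.finite_measure_distr finite_measure_density_bounded[where C=2] fin)
    show "finite_measure D2" unfolding D2_def
      using Z2 h2 hle by (auto intro!: finite_measure.finite_measure_distr finite_measure_density_bounded[where C=2] fin)
    fix t show "(CLINT x|D1. cis (t * x)) = (CLINT x|D2. cis (t * x))"
      unfolding cD1 cD2 using e0 eh by simp
  qed (simp_all add: D1_def D2_def)
  have i1: "(LINT x|D1. indicator S x :: real) = (LINT y|\<mu>. indicator S (Z y) * h y) + (LINT y|\<mu>. indicator S (Z y))"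
  proof -
    have "(LINT x|D1. indicator S x :: real) = (LINT y|density \<mu> (\<lambda>y. ennreal (h y + 1)). indicator S (Z y))"
      unfolding D1_def by (rule integral_distr) (use Z in simp, use S in simp)
    also have "\<dots> = (LINT y|\<mu>. (h y + 1) *\<^sub>R indicator S (Z y))"
      by (rule integral_density) (use Z h hn S in auto)
    also have "\<dots> = (LINT y|\<mu>. indicator S (Z y) * h y + indicator S (Z y))"
      by (intro Bochner_Integration.integral_cong) (auto simp: algebra_simps)
    also have "\<dots> = (LINT y|\<mu>. indicator S (Z y) * h y) + (LINT y|\<mu>. indicator S (Z y))"
      by (intro Bochner_Integration.integral_add int3 int4 fin Z h hb)
    finally show ?thesis .
  qed
  have i2: "(LINT x|D2. indicator S x :: real) = (LINT y|\<nu>. indicator S (Z y) * h y) + (LINT y|\<nu>. indicator S (Z y))"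
  proof -
    have "(LINT x|D2. indicator S x :: real) = (LINT y|density \<nu> (\<lambda>y. ennreal (h y + 1)). indicator S (Z y))"
      unfolding D2_def by (rule integral_distr) (use Z2 in simp, use S in simp)
    also have "\<dots> = (LINT y|\<nu>. (h y + 1) *\<^sub>R indicator S (Z y))"
      by (rule integral_density) (use Z2 h2 hn S in auto)
    also have "\<dots> = (LINT y|\<nu>. indicator S (Z y) * h y + indicator S (Z y))"
      by (intro Bochner_Integration.integral_cong) (auto simp: algebra_simps)
    also have "\<dots> = (LINT y|\<nu>. indicator S (Z y) * h y) + (LINT y|\<nu>. indicator S (Z y))"
      by (intro Bochner_Integration.integral_add int3 int4 fin Z2 h2 hb)
    finally show ?thesis .
  qed
  have "(LINT y|\<mu>. indicator S (Z y)) = (LINT y|\<nu>. indicator S (Z y) :: real)"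
  proof -
    have "(LINT y|\<mu>. indicator S (Z y)) = (LINT x|distr \<mu> borel Z. indicator S x :: real)"
      using Z S by (subst integral_distr) auto
    also have "\<dots> = (LINT x|distr \<nu> borel Z. indicator S x)" using L0 by simp
    also have "\<dots> = (LINT y|\<nu>. indicator S (Z y))" using Z2 S by (subst integral_distr) auto
    finally show ?thesis .
  qed
  then show ?thesis using i1 i2 D by simp
qed

lemma fin_PiM_eq:
  assumes "finite I" "finite_measure \<mu>" "sets \<mu> = sets (PiM I M)" "sets \<nu> = sets (PiM I M)"
    and eq: "\<And>A. (\<And>i. i \<in> I \<Longrightarrow> A i \<in> sets (M i)) \<Longrightarrow> emeasure \<mu> (Pi\<^sub>E I A) = emeasure \<nu> (Pi\<^sub>E I A)"
  shows "\<mu> = \<nu>"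
proof (rule measure_eqI_PiM_finite[where A="\<lambda>_. space (PiM I M)"])
  have "emeasure \<mu> (space (PiM I M)) \<noteq> \<top>" using assms(2) finite_measure.emeasure_finite by blast
  then show "\<And>i::nat. emeasure \<mu> (space (PiM I M)) \<noteq> \<infinity>" by simp
qed (use assms in \<open>auto simp: space_in_prod_algebra space_PiM\<close>)

lemma cos_cis: "complex_of_real (cos x) = (cis x + cis (- x)) / 2"
  by (simp add: complex_eq_iff)

lemma sin_cis: "complex_of_real (sin x) = (cis x - cis (- x)) / (2 * \<i>)"
proof -
  have "cis x - cis (- x) = 2 * \<i> * complex_of_real (sin x)" by (simp add: complex_eq_iff)
  then show ?thesis by simp
qed

lemma cis_eq_cos_sin: "cis x = complex_of_real (cos x) + \<i> * complex_of_real (sin x)"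
  by (simp add: complex_eq_iff)

lemma char_unique_PiM_real:
  fixes I :: "'i set"
  assumes "finite I"
  shows "\<And>\<mu> \<nu>. finite_measure \<mu> \<Longrightarrow> finite_measure \<nu> \<Longrightarrow>
     sets \<mu> = sets (PiM I (\<lambda>_. borel :: real measure)) \<Longrightarrow> sets \<nu> = sets (PiM I (\<lambda>_. borel :: real measure)) \<Longrightarrow>
     (\<And>t. (CLINT y|\<mu>. cis (\<Sum>i\<in>I. t i * y i)) = (CLINT y|\<nu>. cis (\<Sum>i\<in>I. t i * y i))) \<Longrightarrow> \<mu> = \<nu>"
  using assms
proof (induction I rule: finite_induct)
  case empty
  fix \<mu> \<nu> :: "('i \<Rightarrow> real) measure"
  assume f1: "finite_measure \<mu>" and f2: "finite_measure \<nu>"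
    and s1: "sets \<mu> = sets (PiM {} (\<lambda>_. borel :: real measure))"
    and s2: "sets \<nu> = sets (PiM {} (\<lambda>_. borel :: real measure))"
    and ch: "\<And>t. (CLINT y|\<mu>. cis (\<Sum>i\<in>{}. t i * y i)) = (CLINT y|\<nu>. cis (\<Sum>i\<in>{}. t i * y i))"
  have sp1: "space \<mu> = space (PiM {} (\<lambda>_. borel :: real measure))" using sets_eq_imp_space_eq[OF s1] .
  have sp2: "space \<nu> = space (PiM {} (\<lambda>_. borel :: real measure))" using sets_eq_imp_space_eq[OF s2] .
  have "complex_of_real (measure \<mu> (space \<mu>)) = complex_of_real (measure \<nu> (space \<nu>))"
    using ch[of "\<lambda>_. 0"] by simp
  then have mm: "measure \<mu> (space \<mu>) = measure \<nu> (space \<nu>)" by simp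
  show "\<mu> = \<nu>"
  proof (rule fin_PiM_eq[OF _ f1 s1 s2])
    fix A :: "'i \<Rightarrow> real set"
    have "Pi\<^sub>E {} A = space \<mu>" "Pi\<^sub>E {} A = space \<nu>" using sp1 sp2 by (auto simp: space_PiM)
    then show "emeasure \<mu> (Pi\<^sub>E {} A) = emeasure \<nu> (Pi\<^sub>E {} A)"
      using mm f1 f2 by (simp add: finite_measure.emeasure_eq_measure)
  qed simp
next
  case (insert j I)
  fix \<mu> \<nu> :: "('i \<Rightarrow> real) measure"
  assume f1: "finite_measure \<mu>" and f2: "finite_measure \<nu>"
    and s1: "sets \<mu> = sets (PiM (insert j I) (\<lambda>_. borel :: real measure))"
    and s2: "sets \<nu> = sets (PiM (insert j I) (\<lambda>_. borel :: real measure))"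
    and ch: "\<And>t. (CLINT y|\<mu>. cis (\<Sum>i\<in>insert j I. t i * y i)) = (CLINT y|\<nu>. cis (\<Sum>i\<in>insert j I. t i * y i))"
  note IH = insert.IH
  have s21: "sets \<nu> = sets \<mu>" using s1 s2 by simp
  have mZ1: "(\<lambda>y. y j) \<in> borel_measurable \<mu>"
    by (subst measurable_cong_sets[OF s1 refl]) (rule measurable_component_singleton, simp)
  have mZ2: "(\<lambda>y. y j) \<in> borel_measurable \<nu>" using mZ1 by (subst measurable_cong_sets[OF s21 refl])
  have mT1: "(\<lambda>y. \<Sum>i\<in>I. s i * y i) \<in> borel_measurable \<mu>" for s
  proof -
    have "(\<lambda>y. y i) \<in> borel_measurable \<mu>" if "i \<in> I" for i
      using that by (subst measurable_cong_sets[OF s1 refl]) (rule measurable_component_singleton, simp)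
    then show ?thesis by (intro borel_measurable_sum borel_measurable_times) auto
  qed
  have mT2: "(\<lambda>y. \<Sum>i\<in>I. s i * y i) \<in> borel_measurable \<nu>" for s
    using mT1 by (subst measurable_cong_sets[OF s21 refl])
  have sumins: "(\<Sum>i\<in>insert j I. (s(j := t)) i * y i) = t * y j + (\<Sum>i\<in>I. s i * y i)" for s t and y :: "'i \<Rightarrow> real"
    using insert.hyps by (simp add: sum.insert) (intro sum.cong, auto)
  have a: "(CLINT y|\<mu>. cis (t * y j) * cis (\<Sum>i\<in>I. s i * y i)) = (CLINT y|\<nu>. cis (t * y j) * cis (\<Sum>i\<in>I. s i * y i))" for s t
    using ch[of "s(j := t)"] unfolding sumins by (simp add: cis_mult)
  have b: "(CLINT y|\<mu>. cis (t * y j)) = (CLINT y|\<nu>. cis (t * y j))" for t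
    using a[of t "\<lambda>_. 0"] by simp
  have intc: "integrable M (\<lambda>y. cis (t * Z y) * cis (T y))"
    if "finite_measure M" "Z \<in> borel_measurable M" "T \<in> borel_measurable M" for M Z T t
    using that by (intro finite_measure.integrable_const_bound[where B=1]) (auto simp: norm_mult, measurable)
  have neg: "(\<Sum>i\<in>I. (- s i) * y i) = - (\<Sum>i\<in>I. s i * y i)" for s and y :: "'i \<Rightarrow> real"
    by (simp add: sum_negf)
  have cpart: "(CLINT y|M. cis (t * y j) * complex_of_real (cos (\<Sum>i\<in>I. s i * y i))) =
      ((CLINT y|M. cis (t * y j) * cis (\<Sum>i\<in>I. s i * y i)) + (CLINT y|M. cis (t * y j) * cis (\<Sum>i\<in>I. (- s i) * y i))) / 2"
    if "finite_measure M" "(\<lambda>y. y j) \<in> borel_measurable M" "\<And>s. (\<lambda>y. \<Sum>i\<in>I. s i * y i) \<in> borel_measurable M" for M s t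
  proof -
    have "(CLINT y|M. cis (t * y j) * complex_of_real (cos (\<Sum>i\<in>I. s i * y i))) =
      (CLINT y|M. (cis (t * y j) * cis (\<Sum>i\<in>I. s i * y i) + cis (t * y j) * cis (\<Sum>i\<in>I. (- s i) * y i)) / 2)"
      unfolding cos_cis neg by (simp add: algebra_simps)
    also have "\<dots> = ((CLINT y|M. cis (t * y j) * cis (\<Sum>i\<in>I. s i * y i)) + (CLINT y|M. cis (t * y j) * cis (\<Sum>i\<in>I. (- s i) * y i))) / 2"
      by (subst integral_divide_zero, subst Bochner_Integration.integral_add[OF intc[OF that(1,2) that(3)] intc[OF that(1,2) that(3)[of "\<lambda>i. - s i"]]]) simp
    finally show ?thesis .
  qed
  have spart: "(CLINT y|M. cis (t * y j) * complex_of_real (sin (\<Sum>i\<in>I. s i * y i))) =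
      ((CLINT y|M. cis (t * y j) * cis (\<Sum>i\<in>I. s i * y i)) - (CLINT y|M. cis (t * y j) * cis (\<Sum>i\<in>I. (- s i) * y i))) / (2 * \<i>)"
    if "finite_measure M" "(\<lambda>y. y j) \<in> borel_measurable M" "\<And>s. (\<lambda>y. \<Sum>i\<in>I. s i * y i) \<in> borel_measurable M" for M s t
  proof -
    have "(CLINT y|M. cis (t * y j) * complex_of_real (sin (\<Sum>i\<in>I. s i * y i))) =
      (CLINT y|M. (cis (t * y j) * cis (\<Sum>i\<in>I. s i * y i) - cis (t * y j) * cis (\<Sum>i\<in>I. (- s i) * y i)) / (2 * \<i>))"
      unfolding sin_cis neg by (simp add: algebra_simps)
    also have "\<dots> = ((CLINT y|M. cis (t * y j) * cis (\<Sum>i\<in>I. s i * y i)) - (CLINT y|M. cis (t * y j) * cis (\<Sum>i\<in>I. (- s i) * y i))) / (2 * \<i>)"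
      by (subst integral_divide_zero, subst Bochner_Integration.integral_diff[OF intc[OF that(1,2) that(3)] intc[OF that(1,2) that(3)[of "\<lambda>i. - s i"]]]) simp
    finally show ?thesis .
  qed
  have dcos: "(LINT y|\<mu>. indicator S (y j) * cos (\<Sum>i\<in>I. s i * y i)) = (LINT y|\<nu>. indicator S (y j) * cos (\<Sum>i\<in>I. s i * y i))"
    if S: "S \<in> sets borel" for S s
  proof (rule step_D[OF f1 f2 s21 mZ1 _ _ b _ S])
    show "(\<lambda>y. cos (\<Sum>i\<in>I. s i * y i)) \<in> borel_measurable \<mu>" using mT1 by measurable
    fix t show "(CLINT y|\<mu>. cis (t * y j) * complex_of_real (cos (\<Sum>i\<in>I. s i * y i))) =
       (CLINT y|\<nu>. cis (t * y j) * complex_of_real (cos (\<Sum>i\<in>I. s i * y i)))"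
      unfolding cpart[OF f1 mZ1 mT1] cpart[OF f2 mZ2 mT2] a by (rule refl)
  qed simp
  have dsin: "(LINT y|\<mu>. indicator S (y j) * sin (\<Sum>i\<in>I. s i * y i)) = (LINT y|\<nu>. indicator S (y j) * sin (\<Sum>i\<in>I. s i * y i))"
    if S: "S \<in> sets borel" for S s
  proof (rule step_D[OF f1 f2 s21 mZ1 _ _ b _ S])
    show "(\<lambda>y. sin (\<Sum>i\<in>I. s i * y i)) \<in> borel_measurable \<mu>" using mT1 by measurable
    fix t show "(CLINT y|\<mu>. cis (t * y j) * complex_of_real (sin (\<Sum>i\<in>I. s i * y i))) =
       (CLINT y|\<nu>. cis (t * y j) * complex_of_real (sin (\<Sum>i\<in>I. s i * y i)))"
      unfolding spart[OF f1 mZ1 mT1] spart[OF f2 mZ2 mT2] a by (rule refl)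
  qed simp
  have e_gen: "(CLINT y|M. indicator S (y j) * cis (\<Sum>i\<in>I. s i * y i)) =
     complex_of_real (LINT y|M. indicator S (y j) * cos (\<Sum>i\<in>I. s i * y i))
     + \<i> * complex_of_real (LINT y|M. indicator S (y j) * sin (\<Sum>i\<in>I. s i * y i))"
    if "finite_measure M" "(\<lambda>y. y j) \<in> borel_measurable M" "(\<lambda>y. \<Sum>i\<in>I. s i * y i) \<in> borel_measurable M"
      "S \<in> sets borel" for M S s
  proof -
    have ii: "integrable M (\<lambda>y. complex_of_real (indicator S (y j) * f (\<Sum>i\<in>I. s i * y i)))"
      if "f = cos \<or> f = sin" for f
      using that \<open>finite_measure M\<close> \<open>(\<lambda>y. y j) \<in> borel_measurable M\<close> \<open>(\<lambda>y. \<Sum>i\<in>I. s i * y i) \<in> borel_measurable M\<close> \<open>S \<in> sets borel\<close>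
      by (intro finite_measure.integrable_const_bound[where B=1]) (auto simp: indicator_def, measurable)
    have "(CLINT y|M. indicator S (y j) * cis (\<Sum>i\<in>I. s i * y i)) =
       (CLINT y|M. complex_of_real (indicator S (y j) * cos (\<Sum>i\<in>I. s i * y i))
        + \<i> * complex_of_real (indicator S (y j) * sin (\<Sum>i\<in>I. s i * y i)))"
      by (intro Bochner_Integration.integral_cong) (auto simp: cis_eq_cos_sin algebra_simps indicator_def)
    also have "\<dots> = (CLINT y|M. complex_of_real (indicator S (y j) * cos (\<Sum>i\<in>I. s i * y i)))
        + \<i> * (CLINT y|M. complex_of_real (indicator S (y j) * sin (\<Sum>i\<in>I. s i * y i)))"
      using ii by (simp add: Bochner_Integration.integral_add del: of_real_mult)
    finally show ?thesis by (simp only: integral_complex_of_real)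
  qed
  have e: "(CLINT y|\<mu>. indicator S (y j) * cis (\<Sum>i\<in>I. s i * y i)) = (CLINT y|\<nu>. indicator S (y j) * cis (\<Sum>i\<in>I. s i * y i))"
    if S: "S \<in> sets borel" for S s
    using e_gen[OF f1 mZ1 mT1 S] e_gen[OF f2 mZ2 mT2 S] dcos[OF S] dsin[OF S] by simp
  define mS where "mS M S = distr (density M (\<lambda>y. indicator S (y j))) (PiM I (\<lambda>_. borel :: real measure)) (\<lambda>y. restrict y I)"
    for M :: "('i \<Rightarrow> real) measure" and S
  have mr: "(\<lambda>y. restrict y I) \<in> M \<rightarrow>\<^sub>M PiM I (\<lambda>_. borel :: real measure)"
    if "sets M = sets (PiM (insert j I) (\<lambda>_. borel :: real measure))" for M
    by (subst measurable_cong_sets[OF that refl]) (rule measurable_restrict_subset, auto)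
  have mSfin: "finite_measure (mS M S)"
    if "finite_measure M" "sets M = sets (PiM (insert j I) (\<lambda>_. borel :: real measure))" "(\<lambda>y. y j) \<in> borel_measurable M"
      "S \<in> sets borel" for M S
    unfolding mS_def using that mr[OF that(2)]
    by (intro finite_measure.finite_measure_distr finite_measure_density_bounded[where C=1]) (auto simp: indicator_def)
  have mSchar: "(CLINT x|mS M S. cis (\<Sum>i\<in>I. t i * x i)) = (CLINT y|M. indicator S (y j) * cis (\<Sum>i\<in>I. t i * y i))"
    if "sets M = sets (PiM (insert j I) (\<lambda>_. borel :: real measure))" "(\<lambda>y. y j) \<in> borel_measurable M"
      "S \<in> sets borel" for M S t
  proof -
    have mt: "(\<lambda>x. cis (\<Sum>i\<in>I. t i * x i)) \<in> borel_measurable (PiM I (\<lambda>_. borel :: real measure))"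
      by measurable
    have "(CLINT x|mS M S. cis (\<Sum>i\<in>I. t i * x i)) = (CLINT y|density M (\<lambda>y. indicator S (y j)). cis (\<Sum>i\<in>I. t i * restrict y I i))"
      unfolding mS_def by (rule integral_distr[OF _ mt]) (use mr[OF that(1)] in simp)
    also have "\<dots> = (CLINT y|M. indicator S (y j) *\<^sub>R cis (\<Sum>i\<in>I. t i * restrict y I i))"
      using that by (subst integral_density[symmetric]) (auto simp: ennreal_indicator)
    also have "\<dots> = (CLINT y|M. indicator S (y j) * cis (\<Sum>i\<in>I. t i * y i))"
      by (intro Bochner_Integration.integral_cong) (auto simp: scaleR_conv_of_real indicator_def intro!: arg_cong[where f=cis] sum.cong)
    finally show ?thesis .
  qed
  have mSeq: "mS \<mu> S = mS \<nu> S" if S: "S \<in> sets borel" for S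
  proof (rule IH)
    show "finite_measure (mS \<mu> S)" by (rule mSfin[OF f1 s1 mZ1 S])
    show "finite_measure (mS \<nu> S)" by (rule mSfin[OF f2 s2 mZ2 S])
    fix t show "(CLINT y|mS \<mu> S. cis (\<Sum>i\<in>I. t i * y i)) = (CLINT y|mS \<nu> S. cis (\<Sum>i\<in>I. t i * y i))"
      using mSchar[OF s1 mZ1 S] mSchar[OF s2 mZ2 S] e[OF S] by simp
  qed (simp_all add: mS_def)
  have mSem: "emeasure (mS M (A j)) (Pi\<^sub>E I A) = emeasure M (Pi\<^sub>E (insert j I) A)"
    if "sets M = sets (PiM (insert j I) (\<lambda>_. borel :: real measure))" "(\<lambda>y. y j) \<in> borel_measurable M"
      "\<And>i. i \<in> insert j I \<Longrightarrow> A i \<in> sets borel" for M A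
  proof -
    have PI: "Pi\<^sub>E I A \<in> sets (PiM I (\<lambda>_. borel :: real measure))"
      using that(3) insert.hyps by (intro sets_PiM_I_finite) auto
    have PI2: "Pi\<^sub>E (insert j I) A \<in> sets M"
      unfolding that(1) using that(3) insert.hyps by (intro sets_PiM_I_finite) auto
    have sp: "space M = space (PiM (insert j I) (\<lambda>_. borel :: real measure))"
      using sets_eq_imp_space_eq[OF that(1)] .
    have pre: "(\<lambda>y. restrict y I) -` Pi\<^sub>E I A \<inter> space M = {y \<in> space M. restrict y I \<in> Pi\<^sub>E I A}" by auto
    have "emeasure (mS M (A j)) (Pi\<^sub>E I A) = emeasure (density M (\<lambda>y. indicator (A j) (y j))) ((\<lambda>y. restrict y I) -` Pi\<^sub>E I A \<inter> space M)"
      unfolding mS_def by (subst emeasure_distr[OF _ PI]) (use mr[OF that(1)] in auto)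
    also have "\<dots> = (\<integral>\<^sup>+y. indicator (A j) (y j) * indicator ((\<lambda>y. restrict y I) -` Pi\<^sub>E I A \<inter> space M) y \<partial>M)"
      using mr[OF that(1)] PI that(2,3)
      by (subst emeasure_density) (auto intro!: measurable_sets)
    also have "\<dots> = (\<integral>\<^sup>+y. indicator (Pi\<^sub>E (insert j I) A) y \<partial>M)"
      using sp insert.hyps by (intro nn_integral_cong) (auto simp: indicator_def space_PiM PiE_iff extensional_def restrict_def)
    also have "\<dots> = emeasure M (Pi\<^sub>E (insert j I) A)" using PI2 by simp
    finally show ?thesis .
  qed
  show "\<mu> = \<nu>"
  proof (rule fin_PiM_eq[OF _ f1 s1 s2])
    fix A :: "'i \<Rightarrow> real set" assume A: "\<And>i. i \<in> insert j I \<Longrightarrow> A i \<in> sets borel"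
    have "emeasure \<mu> (Pi\<^sub>E (insert j I) A) = emeasure (mS \<mu> (A j)) (Pi\<^sub>E I A)"
      using mSem[of \<mu> A, OF s1 mZ1] A by simp
    also have "\<dots> = emeasure (mS \<nu> (A j)) (Pi\<^sub>E I A)" using mSeq[of "A j"] A by simp
    also have "\<dots> = emeasure \<nu> (Pi\<^sub>E (insert j I) A)" using mSem[of \<nu> A, OF s2 mZ2] A by simp
    finally show "emeasure \<mu> (Pi\<^sub>E (insert j I) A) = emeasure \<nu> (Pi\<^sub>E (insert j I) A)" .
  qed (use insert.hyps in simp)
qed

lemma char_unique_PiM_complex:
  fixes J :: "'i set" and \<mu> \<nu> :: "('i \<Rightarrow> complex) measure"
  assumes J: "finite J" and f1: "finite_measure \<mu>" and f2: "finite_measure \<nu>"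
    and s1: "sets \<mu> = sets (PiM J (\<lambda>_. borel :: complex measure))"
    and s2: "sets \<nu> = sets (PiM J (\<lambda>_. borel :: complex measure))"
    and ch: "\<And>t. (CLINT y|\<mu>. cis (\<Sum>i\<in>J. Re (cnj (t i) * y i))) = (CLINT y|\<nu>. cis (\<Sum>i\<in>J. Re (cnj (t i) * y i)))"
  shows "\<mu> = \<nu>"
proof -
  define R where "R y = (\<lambda>p\<in>J \<times> (UNIV::bool set). if snd p then Re (y (fst p)) else Im (y (fst p)))"
    for y :: "'i \<Rightarrow> complex"
  define Q where "Q x = (\<lambda>i\<in>J. Complex (x (i, True)) (x (i, False)))" for x :: "'i \<times> bool \<Rightarrow> real"
  let ?C = "PiM J (\<lambda>_. borel :: complex measure)"
  let ?D = "PiM (J \<times> (UNIV::bool set)) (\<lambda>_. borel :: real measure)"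
  have mR: "R \<in> ?C \<rightarrow>\<^sub>M ?D"
    unfolding R_def
  proof (rule measurable_restrict)
    fix p :: "'i \<times> bool" assume p: "p \<in> J \<times> UNIV"
    then have "(\<lambda>y. y (fst p)) \<in> ?C \<rightarrow>\<^sub>M borel" by (intro measurable_component_singleton) auto
    then show "(\<lambda>y. if snd p then Re (y (fst p)) else Im (y (fst p))) \<in> ?C \<rightarrow>\<^sub>M borel"
      by (cases "snd p") (simp_all, measurable)
  qed
  have mQ: "Q \<in> ?D \<rightarrow>\<^sub>M ?C"
    unfolding Q_def
  proof (rule measurable_restrict)
    fix i assume i: "i \<in> J"
    have a: "(\<lambda>x. x (i, b)) \<in> ?D \<rightarrow>\<^sub>M borel" for b using i by (intro measurable_component_singleton) auto
    have "(\<lambda>x. complex_of_real (x (i, True)) + \<i> * complex_of_real (x (i, False))) \<in> ?D \<rightarrow>\<^sub>M borel"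
      using a[of True] a[of False] by measurable
    then show "(\<lambda>x. Complex (x (i, True)) (x (i, False))) \<in> ?D \<rightarrow>\<^sub>M borel"
      by (simp add: complex_eq_iff Complex_eq)
  qed
  have mR1: "R \<in> \<mu> \<rightarrow>\<^sub>M ?D" using mR by (subst measurable_cong_sets[OF s1 refl])
  have mR2: "R \<in> \<nu> \<rightarrow>\<^sub>M ?D" using mR by (subst measurable_cong_sets[OF s2 refl])
  have QR: "Q (R y) = y" if "y \<in> space ?C" for y
    using that by (auto simp: Q_def R_def space_PiM PiE_iff extensional_def complex_eq_iff fun_eq_iff)
  have sumR: "(\<Sum>p\<in>J \<times> UNIV. t p * R y p) = (\<Sum>i\<in>J. Re (cnj (Complex (t (i, True)) (t (i, False))) * y i))"
    for t y
  proof -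
    have "(\<Sum>p\<in>J \<times> UNIV. t p * R y p) = (\<Sum>i\<in>J. \<Sum>b\<in>UNIV. t (i, b) * R y (i, b))"
      by (subst sum.cartesian_product) simp
    also have "\<dots> = (\<Sum>i\<in>J. Re (cnj (Complex (t (i, True)) (t (i, False))) * y i))"
      by (intro sum.cong) (auto simp: R_def UNIV_bool)
    finally show ?thesis .
  qed
  have eqR: "distr \<mu> ?D R = distr \<nu> ?D R"
  proof (rule char_unique_PiM_real)
    show "finite (J \<times> (UNIV :: bool set))" using J by simp
    show "finite_measure (distr \<mu> ?D R)" using f1 mR1 by (rule finite_measure.finite_measure_distr)
    show "finite_measure (distr \<nu> ?D R)" using f2 mR2 by (rule finite_measure.finite_measure_distr)
    fix t :: "'i \<times> bool \<Rightarrow> real"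
    have mt: "(\<lambda>x. cis (\<Sum>p\<in>J \<times> UNIV. t p * x p)) \<in> borel_measurable ?D" by measurable
    show "(CLINT y|distr \<mu> ?D R. cis (\<Sum>p\<in>J \<times> UNIV. t p * y p)) = (CLINT y|distr \<nu> ?D R. cis (\<Sum>p\<in>J \<times> UNIV. t p * y p))"
      using ch[of "\<lambda>i. Complex (t (i, True)) (t (i, False))"]
      by (simp add: integral_distr[OF mR1 mt] integral_distr[OF mR2 mt] sumR)
  qed simp_all
  have "\<mu> = distr (distr \<mu> ?D R) ?C Q"
  proof -
    have "distr (distr \<mu> ?D R) ?C Q = distr \<mu> ?C (Q \<circ> R)" by (rule distr_distr[OF mQ mR1])
    also have "\<dots> = distr \<mu> ?C (\<lambda>x. x)"
      by (rule distr_cong) (use QR sets_eq_imp_space_eq[OF s1] in auto)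
    also have "\<dots> = \<mu>" by (rule distr_id2) (use s1 in simp)
    finally show ?thesis by simp
  qed
  also have "\<dots> = distr (distr \<nu> ?D R) ?C Q" using eqR by simp
  also have "\<dots> = \<nu>"
  proof -
    have "distr (distr \<nu> ?D R) ?C Q = distr \<nu> ?C (Q \<circ> R)" by (rule distr_distr[OF mQ mR2])
    also have "\<dots> = distr \<nu> ?C (\<lambda>x. x)"
      by (rule distr_cong) (use QR sets_eq_imp_space_eq[OF s2] in auto)
    also have "\<dots> = \<nu>" by (rule distr_id2) (use s2 in simp)
    finally show ?thesis .
  qed
  finally show ?thesis .
qed

lemma lborel_complex_eq:
  "distr (lborel \<Otimes>\<^sub>M lborel) borel (\<lambda>(x, y). Complex x y) = (lborel :: complex measure)"
proof (rule lborel_eqI[symmetric])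
  fix l u :: complex
  assume le: "\<And>b. b \<in> Basis \<Longrightarrow> l \<bullet> b \<le> u \<bullet> b"
  then have le1: "Re l \<le> Re u" and le2: "Im l \<le> Im u"
    using le[of 1] le[of \<i>] by (auto simp: Basis_complex_def inner_complex_def)
  have m: "(\<lambda>(x, y). Complex x y) \<in> (lborel \<Otimes>\<^sub>M lborel :: (real \<times> real) measure) \<rightarrow>\<^sub>M borel"
  proof -
    have "(\<lambda>p::real \<times> real. complex_of_real (fst p) + \<i> * complex_of_real (snd p)) \<in> borel_measurable (lborel \<Otimes>\<^sub>M lborel)"
      by measurable
    then show ?thesis by (simp add: case_prod_beta Complex_eq)
  qed
  have pre: "(\<lambda>(x, y). Complex x y) -` box l u \<inter> space (lborel \<Otimes>\<^sub>M lborel) = box (Re l, Im l) (Re u, Im u)"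
    by (auto simp: box_def Basis_complex_def Basis_prod_def inner_complex_def inner_prod_def space_pair_measure)
  have "emeasure (distr (lborel \<Otimes>\<^sub>M lborel) borel (\<lambda>(x, y). Complex x y)) (box l u)
      = emeasure (lborel \<Otimes>\<^sub>M lborel) (box (Re l, Im l) (Re u, Im u))"
    using m by (subst emeasure_distr) (auto simp: pre)
  also have "\<dots> = emeasure (lborel :: (real \<times> real) measure) (box (Re l, Im l) (Re u, Im u))"
    by (simp add: lborel_prod)
  also have "\<dots> = ennreal ((Re u - Re l) * (Im u - Im l))"
    using le1 le2 by (simp add: emeasure_lborel_box_eq Basis_prod_def inner_prod_def)
  also have "\<dots> = ennreal (\<Prod>b\<in>Basis. (u - l) \<bullet> b)"
    by (simp add: Basis_complex_def inner_complex_def)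
  finally show "emeasure (distr (lborel \<Otimes>\<^sub>M lborel) borel (\<lambda>(x, y). Complex x y)) (box l u) = ennreal (\<Prod>b\<in>Basis. (u - l) \<bullet> b)" .
qed simp

definition gr :: "real \<Rightarrow> real" where "gr x = exp (- (x * x)) / sqrt pi"

lemma gr_eq: "density lborel (\<lambda>x. ennreal (gr x)) = distr std_normal_distribution borel (\<lambda>u. u / sqrt 2)"
proof -
  let ?T = "\<lambda>u::real. u / sqrt 2"
  have pt: "std_normal_density x = gr (?T x) / sqrt 2" for x
  proof -
    have "sqrt (2 * pi) = sqrt 2 * sqrt pi" by (simp add: real_sqrt_mult)
    moreover have "- (x / sqrt 2 * (x / sqrt 2)) = - x\<^sup>2 / 2"
      by (simp add: power2_eq_square)
    ultimately show ?thesis unfolding gr_def std_normal_density_def normal_density_def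
      by (simp add: field_simps)
  qed
  have e1: "distr (density lborel (\<lambda>x. ennreal (std_normal_density x))) borel ?T
      = density (distr lborel borel ?T) (\<lambda>x. ennreal (gr x / sqrt 2))"
    by (subst density_distr) (auto simp: pt gr_def)
  have e2: "density (distr lborel borel ?T) (\<lambda>x. ennreal (gr x / sqrt 2))
      = density (density (distr lborel borel ?T) (\<lambda>_. ennreal (1 / sqrt 2))) (\<lambda>x. ennreal (gr x))"
    by (subst density_density_eq) (auto simp: gr_def ennreal_mult''[symmetric] mult.commute intro!: arg_cong2[where f=density])
  have e3: "density (distr lborel borel ?T) (\<lambda>_. ennreal (1 / sqrt 2)) = lborel"
    using lborel_real_affine[of "1 / sqrt 2" 0] by simp
  show ?thesis using e1 e2 e3 by simp
qed

abbreviation "NN \<equiv> std_normal_distribution \<Otimes>\<^sub>M std_normal_distribution"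

definition Psi :: "real \<times> real \<Rightarrow> complex" where
  "Psi p = Complex (fst p / sqrt 2) (snd p / sqrt 2)"

lemma Psi_eq: "Psi = (\<lambda>p. complex_of_real (fst p / sqrt 2) + \<i> * complex_of_real (snd p / sqrt 2))"
  by (auto simp: Psi_def complex_eq_iff fun_eq_iff)

lemma Psi_measurable[measurable]: "Psi \<in> borel_measurable (M1 \<Otimes>\<^sub>M M2)"
  if "sets M1 = sets borel" "sets M2 = sets borel"
  unfolding Psi_eq using that by measurable

lemma gr_measurable[measurable]: "gr \<in> borel_measurable borel"
  unfolding gr_def by measurable

lemma prob_space_gr: "prob_space (density lborel (\<lambda>x. ennreal (gr x)))"
  unfolding gr_eq by (rule prob_space.prob_space_distr) (auto intro: real_distribution.axioms(1) real_dist_normal_dist)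

lemma cgauss_eq: "density lborel std_cgauss_density = distr NN borel Psi"
proof -
  let ?C = "\<lambda>(x, y). Complex x y"
  let ?T = "\<lambda>u::real. u / sqrt 2"
  have mC: "?C \<in> (lborel \<Otimes>\<^sub>M lborel :: (real \<times> real) measure) \<rightarrow>\<^sub>M borel"
  proof -
    have "(\<lambda>p::real \<times> real. complex_of_real (fst p) + \<i> * complex_of_real (snd p)) \<in> borel_measurable (lborel \<Otimes>\<^sub>M lborel)"
      by measurable
    then show ?thesis by (simp add: case_prod_beta Complex_eq)
  qed
  have mf: "std_cgauss_density \<in> borel_measurable borel" unfolding std_cgauss_density_def by measurable
  have fC: "std_cgauss_density (Complex x y) = ennreal (gr x) * ennreal (gr y)" for x y
  proof -
    have "norm (Complex x y) * norm (Complex x y) = x * x + y * y"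
      by (simp add: cmod_def power2_eq_square[symmetric])
    then have "exp (- (norm (Complex x y) * norm (Complex x y))) / pi = gr x * gr y"
      unfolding gr_def by (simp add: exp_add[symmetric] field_simps)
    then show ?thesis unfolding std_cgauss_density_def
      by (simp add: ennreal_mult''[symmetric] gr_def)
  qed
  have sf: "sigma_finite_measure (density lborel (\<lambda>x. ennreal (gr x)))"
    using prob_space_gr by (simp add: prob_space_imp_sigma_finite)
  have "density lborel std_cgauss_density = density (distr (lborel \<Otimes>\<^sub>M lborel) borel ?C) std_cgauss_density"
    by (simp add: lborel_complex_eq)
  also have "\<dots> = distr (density (lborel \<Otimes>\<^sub>M lborel) (\<lambda>p. std_cgauss_density (?C p))) borel ?C"
    by (rule density_distr[OF mf mC])
  also have "(\<lambda>p. std_cgauss_density (?C p)) = (\<lambda>(x, y). ennreal (gr x) * ennreal (gr y))"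
    by (auto simp: fC)
  also have "density (lborel \<Otimes>\<^sub>M lborel) (\<lambda>(x, y). ennreal (gr x) * ennreal (gr y))
      = density lborel (\<lambda>x. ennreal (gr x)) \<Otimes>\<^sub>M density lborel (\<lambda>x. ennreal (gr x))"
    by (rule pair_measure_density[symmetric]) (auto simp: sf lborel.sigma_finite_measure_axioms)
  also have "\<dots> = distr std_normal_distribution borel ?T \<Otimes>\<^sub>M distr std_normal_distribution borel ?T"
    by (simp add: gr_eq)
  also have "\<dots> = distr NN (borel \<Otimes>\<^sub>M borel) (\<lambda>(x, y). (?T x, ?T y))"
    by (rule pair_measure_distr) (auto simp: gr_eq[symmetric] sf)
  also have "distr (distr NN (borel \<Otimes>\<^sub>M borel) (\<lambda>(x, y). (?T x, ?T y))) borel ?C = distr NN borel (?C \<circ> (\<lambda>(x, y). (?T x, ?T y)))"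
  proof (rule distr_distr)
    have "(\<lambda>p::real \<times> real. complex_of_real (fst p) + \<i> * complex_of_real (snd p)) \<in> borel_measurable (borel \<Otimes>\<^sub>M borel)"
      by measurable
    then show "?C \<in> (borel \<Otimes>\<^sub>M borel) \<rightarrow>\<^sub>M borel" by (simp add: case_prod_beta Complex_eq)
  qed measurable
  also have "?C \<circ> (\<lambda>(x, y). (?T x, ?T y)) = Psi" by (auto simp: Psi_def fun_eq_iff)
  finally show ?thesis .
qed

lemma N_prob: "prob_space std_normal_distribution"
  using real_dist_normal_dist by (simp add: real_distribution_def)

lemma NN_pair: "pair_sigma_finite std_normal_distribution std_normal_distribution"
proof -
  interpret N: prob_space std_normal_distribution by (rule N_prob)
  interpret pair_prob_space std_normal_distribution std_normal_distribution ..
  show ?thesis ..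
qed

lemma NN_prod:
  fixes A B :: "real \<Rightarrow> 'b::{real_normed_field, banach, second_countable_topology}"
  assumes iA: "integrable std_normal_distribution A" and iB: "integrable std_normal_distribution B"
  shows "integrable NN (\<lambda>p. A (fst p) * B (snd p))"
    and "integral\<^sup>L NN (\<lambda>p. A (fst p) * B (snd p)) = integral\<^sup>L std_normal_distribution A * integral\<^sup>L std_normal_distribution B"
proof -
  interpret P: pair_sigma_finite std_normal_distribution std_normal_distribution by (rule NN_pair)
  have mA[measurable]: "A \<in> borel_measurable borel" using borel_measurable_integrable[OF iA] by simp
  have mB[measurable]: "B \<in> borel_measurable borel" using borel_measurable_integrable[OF iB] by simp
  show int: "integrable NN (\<lambda>p. A (fst p) * B (snd p))"
  proof (rule P.Fubini_integrable)
    show "(\<lambda>p. A (fst p) * B (snd p)) \<in> borel_measurable NN" by measurable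
    have "(\<lambda>x. LINT y|std_normal_distribution. norm (A (fst (x, y)) * B (snd (x, y))))
        = (\<lambda>x. norm (A x) * (LINT y|std_normal_distribution. norm (B y)))"
      by (simp add: norm_mult)
    moreover have "integrable std_normal_distribution (\<lambda>x. norm (A x) * (LINT y|std_normal_distribution. norm (B y)))"
      using iA by (intro integrable_mult_left integrable_norm)
    ultimately show "integrable std_normal_distribution (\<lambda>x. LINT y|std_normal_distribution. norm (A (fst (x, y)) * B (snd (x, y))))"
      by simp
    show "AE x in std_normal_distribution. integrable std_normal_distribution (\<lambda>y. A (fst (x, y)) * B (snd (x, y)))"
      using iB by (auto intro!: integrable_mult_right)
  qed
  have "integral\<^sup>L NN (\<lambda>p. A (fst p) * B (snd p))
      = (\<integral>x. \<integral>y. A (fst (x, y)) * B (snd (x, y)) \<partial>std_normal_distribution \<partial>std_normal_distribution)"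
    by (rule P.integral_fst'[OF int, symmetric])
  also have "\<dots> = (\<integral>x. A x * integral\<^sup>L std_normal_distribution B \<partial>std_normal_distribution)"
    by simp
  also have "\<dots> = integral\<^sup>L std_normal_distribution A * integral\<^sup>L std_normal_distribution B"
    by simp
  finally show "integral\<^sup>L NN (\<lambda>p. A (fst p) * B (snd p)) = integral\<^sup>L std_normal_distribution A * integral\<^sup>L std_normal_distribution B" .
qed

lemma N_fin: "finite_measure std_normal_distribution"
proof -
  interpret prob_space std_normal_distribution by (rule N_prob)
  show ?thesis by unfold_locales
qed

lemma N_int_const: "integrable std_normal_distribution (\<lambda>_. c :: 'b::{banach, second_countable_topology})"
  using N_fin by (simp add: finite_measure.integrable_const)

lemma N_integral_const: "integral\<^sup>L std_normal_distribution (\<lambda>_. c :: 'b::{banach, second_countable_topology}) = c"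
proof -
  interpret prob_space std_normal_distribution by (rule N_prob)
  have "measure std_normal_distribution UNIV = 1" using prob_space by simp
  then show ?thesis by simp
qed

lemma N_int_x: "integrable std_normal_distribution (\<lambda>x. x)"
  using integrable_std_normal_distribution_moment[of 1] by simp

lemma N_int_x2: "integrable std_normal_distribution (\<lambda>x. x * x)"
  using integrable_std_normal_distribution_moment[of 2] by (simp add: power2_eq_square)

lemma N_integral_x: "integral\<^sup>L std_normal_distribution (\<lambda>x. x) = 0"
  using integral_std_normal_distribution_moment_odd[of 1] by simp

lemma N_integral_x2: "integral\<^sup>L std_normal_distribution (\<lambda>x. x * x) = 1"
  using std_normal_distribution_even_moments[of 1] by (simp add: power2_eq_square)

lemma cgauss_transfer:
  fixes h :: "complex \<Rightarrow> 'b::{banach, second_countable_topology}"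
  assumes X: "distributed M lborel X std_cgauss_density" and h: "h \<in> borel_measurable borel"
  shows "integral\<^sup>L M (\<lambda>\<omega>. h (X \<omega>)) = integral\<^sup>L NN (\<lambda>p. h (Psi p))"
    and "integrable M (\<lambda>\<omega>. h (X \<omega>)) \<longleftrightarrow> integrable NN (\<lambda>p. h (Psi p))"
proof -
  have mX: "X \<in> M \<rightarrow>\<^sub>M lborel" using X by (simp add: distributed_def)
  have d: "distr M lborel X = distr NN borel Psi" using X by (simp add: distributed_def cgauss_eq)
  have mP: "Psi \<in> NN \<rightarrow>\<^sub>M borel" by measurable
  have "integral\<^sup>L M (\<lambda>\<omega>. h (X \<omega>)) = integral\<^sup>L (distr M lborel X) h"
    by (rule integral_distr[where g=X and M=M and N=lborel and f=h, symmetric]) (use mX h in auto)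
  also have "\<dots> = integral\<^sup>L (distr NN borel Psi) h" using d by simp
  also have "\<dots> = integral\<^sup>L NN (\<lambda>p. h (Psi p))" using mP h by (simp add: integral_distr)
  finally show "integral\<^sup>L M (\<lambda>\<omega>. h (X \<omega>)) = integral\<^sup>L NN (\<lambda>p. h (Psi p))" .
  have "integrable M (\<lambda>\<omega>. h (X \<omega>)) \<longleftrightarrow> integrable (distr M lborel X) h"
    by (rule integrable_distr_eq[where g=X and M=M and N=lborel and f=h, symmetric]) (use mX h in auto)
  also have "\<dots> \<longleftrightarrow> integrable (distr NN borel Psi) h" using d by simp
  also have "\<dots> \<longleftrightarrow> integrable NN (\<lambda>p. h (Psi p))" using mP h by (simp add: integrable_distr_eq)
  finally show "integrable M (\<lambda>\<omega>. h (X \<omega>)) \<longleftrightarrow> integrable NN (\<lambda>p. h (Psi p))" .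
qed

lemma cgauss_mean:
  assumes X: "distributed M lborel X std_cgauss_density"
  shows "integrable M X" "integral\<^sup>L M X = 0"
proof -
  have eq: "Psi = (\<lambda>p. complex_of_real (fst p / sqrt 2) * 1 + \<i> * (1 * complex_of_real (snd p / sqrt 2)))"
    by (simp add: Psi_eq)
  have i1: "integrable std_normal_distribution (\<lambda>x. complex_of_real (x / sqrt 2))"
    using N_int_x by (intro integrable_of_real integrable_divide_zero) simp
  have i2: "integrable NN (\<lambda>p. complex_of_real (fst p / sqrt 2) * 1)"
    by (rule NN_prod(1)[OF i1 N_int_const])
  have i3: "integrable NN (\<lambda>p. 1 * complex_of_real (snd p / sqrt 2))"
    by (rule NN_prod(1)[OF N_int_const i1])
  have z: "integral\<^sup>L std_normal_distribution (\<lambda>x. complex_of_real (x / sqrt 2)) = 0"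
  proof -
    have "integral\<^sup>L std_normal_distribution (\<lambda>x. complex_of_real (x / sqrt 2)) = complex_of_real (integral\<^sup>L std_normal_distribution (\<lambda>x. x / sqrt 2))"
      by (rule integral_complex_of_real)
    also have "\<dots> = 0" using N_integral_x by simp
    finally show ?thesis .
  qed
  have "integrable NN Psi" unfolding eq
    by (intro Bochner_Integration.integrable_add integrable_mult_right i2 i3)
  then show "integrable M X" using cgauss_transfer(2)[OF X, of "\<lambda>z. z"] by simp
  have "integral\<^sup>L NN Psi = integral\<^sup>L NN (\<lambda>p. complex_of_real (fst p / sqrt 2) * 1) + integral\<^sup>L NN (\<lambda>p. \<i> * (1 * complex_of_real (snd p / sqrt 2)))"
    unfolding eq by (rule Bochner_Integration.integral_add[OF i2 integrable_mult_right[OF i3]])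
  also have "\<dots> = integral\<^sup>L NN (\<lambda>p. complex_of_real (fst p / sqrt 2) * 1) + \<i> * integral\<^sup>L NN (\<lambda>p. 1 * complex_of_real (snd p / sqrt 2))"
    by (simp only: integral_mult_right_zero)
  also have "\<dots> = 0"
    unfolding NN_prod(2)[OF i1 N_int_const] NN_prod(2)[OF N_int_const i1] z by simp
  finally have "integral\<^sup>L NN Psi = 0" .
  then show "integral\<^sup>L M X = 0" using cgauss_transfer(1)[OF X, of "\<lambda>z. z"] by simp
qed

lemma cgauss_var:
  assumes X: "distributed M lborel X std_cgauss_density"
  shows "integrable M (\<lambda>\<omega>. (cmod (X \<omega>))\<^sup>2)" "integral\<^sup>L M (\<lambda>\<omega>. (cmod (X \<omega>))\<^sup>2) = 1"
proof -
  have eq: "(\<lambda>p. (cmod (Psi p))\<^sup>2) = (\<lambda>p. (fst p * fst p / 2) * 1 + 1 * (snd p * snd p / 2))"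
    unfolding cmod_power2 by (simp add: Psi_def power2_eq_square fun_eq_iff)
  have i1: "integrable std_normal_distribution (\<lambda>x. x * x / 2)"
    using N_int_x2 by (intro integrable_divide_zero) simp
  have i2: "integrable NN (\<lambda>p. (fst p * fst p / 2) * 1)" by (rule NN_prod(1)[OF i1 N_int_const])
  have i3: "integrable NN (\<lambda>p. 1 * (snd p * snd p / 2))" by (rule NN_prod(1)[OF N_int_const i1])
  have v: "integral\<^sup>L std_normal_distribution (\<lambda>x. x * x / 2) = 1 / 2"
    using N_integral_x2 by simp
  have "integrable NN (\<lambda>p. (cmod (Psi p))\<^sup>2)" unfolding eq
    by (intro Bochner_Integration.integrable_add i2 i3)
  then show "integrable M (\<lambda>\<omega>. (cmod (X \<omega>))\<^sup>2)" using cgauss_transfer(2)[OF X, of "\<lambda>z. (cmod z)\<^sup>2"] by simp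
  have "integral\<^sup>L NN (\<lambda>p. (cmod (Psi p))\<^sup>2) = integral\<^sup>L NN (\<lambda>p. (fst p * fst p / 2) * 1) + integral\<^sup>L NN (\<lambda>p. 1 * (snd p * snd p / 2))"
    unfolding eq by (rule Bochner_Integration.integral_add[OF i2 i3])
  also have "\<dots> = 1"
    unfolding NN_prod(2)[OF i1 N_int_const] NN_prod(2)[OF N_int_const i1] v N_integral_const by simp
  finally have "integral\<^sup>L NN (\<lambda>p. (cmod (Psi p))\<^sup>2) = 1" .
  then show "integral\<^sup>L M (\<lambda>\<omega>. (cmod (X \<omega>))\<^sup>2) = 1" using cgauss_transfer(1)[OF X, of "\<lambda>z. (cmod z)\<^sup>2"] by simp
qed

lemma char_N: "(CLINT x|std_normal_distribution. cis (t * x)) = exp (- t\<^sup>2 / 2)"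
  using char_std_normal_distribution unfolding char_def by (simp add: cis_conv_exp fun_eq_iff)

lemma cgauss_char:
  assumes X: "distributed M lborel X std_cgauss_density"
  shows "(CLINT \<omega>|M. cis (Re (cnj c * X \<omega>))) = exp (- (cmod c)\<^sup>2 / 4)"
proof -
  let ?a = "Re c / sqrt 2" and ?b = "Im c / sqrt 2"
  have eq: "(\<lambda>p. cis (Re (cnj c * Psi p))) = (\<lambda>p. cis (?a * fst p) * cis (?b * snd p))"
    by (auto simp: Psi_def cis_mult fun_eq_iff field_simps)
  have ic: "integrable std_normal_distribution (\<lambda>x. cis (t * x))" for t
    using N_fin by (intro finite_measure.integrable_const_bound[where B=1]) (auto simp: cis_conv_exp)
  have "(CLINT p|NN. cis (Re (cnj c * Psi p))) = (CLINT x|std_normal_distribution. cis (?a * x)) * (CLINT x|std_normal_distribution. cis (?b * x))"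
    unfolding eq by (rule NN_prod(2)[OF ic ic])
  also have "\<dots> = exp (- ?a\<^sup>2 / 2) * exp (- ?b\<^sup>2 / 2)" by (simp only: char_N of_real_mult)
  also have "\<dots> = exp (- (cmod c)\<^sup>2 / 4)"
    by (simp add: cmod_power2 power_divide exp_add[symmetric] field_simps)
  finally have r: "(CLINT p|NN. cis (Re (cnj c * Psi p))) = exp (- (cmod c)\<^sup>2 / 4)" .
  have "(\<lambda>z. cis (Re (cnj c * z))) \<in> borel_measurable borel" by measurable
  then show ?thesis using cgauss_transfer(1)[OF X, of "\<lambda>z. cis (Re (cnj c * z))"] r by simp
qed

lemma measurable_cnj_comp[measurable]:
  "f \<in> borel_measurable M \<Longrightarrow> (\<lambda>x. cnj (f x)) \<in> borel_measurable M"
proof -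
  assume f[measurable]: "f \<in> borel_measurable M"
  have "(\<lambda>x. cnj (f x)) = (\<lambda>x. complex_of_real (Re (f x)) - \<i> * complex_of_real (Im (f x)))"
    by (simp add: fun_eq_iff complex_eq_iff)
  also have "\<dots> \<in> borel_measurable M" by measurable
  finally show ?thesis .
qed

lemma measurable_cnj[measurable]: "cnj \<in> borel_measurable borel"
  using measurable_cnj_comp[of "\<lambda>x. x" borel] by simp

locale gseries = prob_space M for M :: "'a measure" +
  fixes a :: "nat \<Rightarrow> 'a \<Rightarrow> complex"
  assumes indep: "indep_vars (\<lambda>_. borel) a UNIV"
    and distr_a: "\<And>k. distributed M lborel (a k) std_cgauss_density"
begin

lemma ma[measurable]: "a k \<in> borel_measurable M"
  using distributed_measurable[OF distr_a[of k]] by simp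

lemma int_a: "integrable M (a k)" and mean_a: "integral\<^sup>L M (a k) = 0"
  using cgauss_mean[OF distr_a[of k]] by auto

lemma int_sq: "integrable M (\<lambda>\<omega>. (cmod (a k \<omega>))\<^sup>2)" and var_a: "integral\<^sup>L M (\<lambda>\<omega>. (cmod (a k \<omega>))\<^sup>2) = 1"
  using cgauss_var[OF distr_a[of k]] by auto

lemma char_a: "(CLINT \<omega>|M. cis (Re (cnj c * a k \<omega>))) = exp (- (cmod c)\<^sup>2 / 4)"
  using cgauss_char[OF distr_a[of k]] .

lemma amgm: "cmod x * cmod y \<le> ((cmod x)\<^sup>2 + (cmod y)\<^sup>2) / 2"
proof -
  have "0 \<le> (cmod x - cmod y)\<^sup>2" by simp
  then show ?thesis by (simp add: power2_eq_square algebra_simps)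
qed

lemma int_prod_abs: "integrable M (\<lambda>\<omega>. cmod (a k \<omega>) * cmod (a l \<omega>))"
proof (rule Bochner_Integration.integrable_bound)
  show "integrable M (\<lambda>\<omega>. ((cmod (a k \<omega>))\<^sup>2 + (cmod (a l \<omega>))\<^sup>2) / 2)"
    using int_sq[of k] int_sq[of l] by (intro integrable_divide_zero Bochner_Integration.integrable_add)
  show "AE \<omega> in M. norm (cmod (a k \<omega>) * cmod (a l \<omega>)) \<le> norm (((cmod (a k \<omega>))\<^sup>2 + (cmod (a l \<omega>))\<^sup>2) / 2)"
    using amgm by (auto simp: abs_mult)
qed measurable

lemma int_prod: "integrable M (\<lambda>\<omega>. a k \<omega> * cnj (a l \<omega>))"
  by (rule Bochner_Integration.integrable_bound[OF int_prod_abs[of k l]]) (measurable, auto simp: norm_mult)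

lemma nn_prod_le: "(\<integral>\<^sup>+\<omega>. ennreal (cmod (a k \<omega>) * cmod (a l \<omega>)) \<partial>M) \<le> 1"
proof -
  have "(\<integral>\<^sup>+\<omega>. ennreal (cmod (a k \<omega>) * cmod (a l \<omega>)) \<partial>M) \<le> (\<integral>\<^sup>+\<omega>. ennreal (((cmod (a k \<omega>))\<^sup>2 + (cmod (a l \<omega>))\<^sup>2) / 2) \<partial>M)"
    by (intro nn_integral_mono ennreal_leI amgm)
  also have "\<dots> = ennreal (integral\<^sup>L M (\<lambda>\<omega>. ((cmod (a k \<omega>))\<^sup>2 + (cmod (a l \<omega>))\<^sup>2) / 2))"
    using int_sq[of k] int_sq[of l]
    by (intro nn_integral_eq_integral integrable_divide_zero Bochner_Integration.integrable_add) auto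
  also have "integral\<^sup>L M (\<lambda>\<omega>. ((cmod (a k \<omega>))\<^sup>2 + (cmod (a l \<omega>))\<^sup>2) / 2) = 1"
    using int_sq[of k] int_sq[of l] var_a[of k] var_a[of l] by simp
  finally show ?thesis by simp
qed

lemma nn_abs_le: "(\<integral>\<^sup>+\<omega>. ennreal (cmod (a k \<omega>)) \<partial>M) \<le> 1"
proof -
  have "(\<integral>\<^sup>+\<omega>. ennreal (cmod (a k \<omega>)) \<partial>M) \<le> (\<integral>\<^sup>+\<omega>. ennreal (((cmod (a k \<omega>))\<^sup>2 + 1) / 2) \<partial>M)"
  proof (intro nn_integral_mono ennreal_leI)
    fix \<omega> show "cmod (a k \<omega>) \<le> ((cmod (a k \<omega>))\<^sup>2 + 1) / 2"
      using amgm[of "a k \<omega>" 1] by simp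
  qed
  also have "\<dots> = ennreal (integral\<^sup>L M (\<lambda>\<omega>. ((cmod (a k \<omega>))\<^sup>2 + 1) / 2))"
    using int_sq[of k]
    by (intro nn_integral_eq_integral integrable_divide_zero Bochner_Integration.integrable_add) auto
  also have "integral\<^sup>L M (\<lambda>\<omega>. ((cmod (a k \<omega>))\<^sup>2 + 1) / 2) = 1"
    using int_sq[of k] var_a[of k] by (simp add: prob_space)
  finally show ?thesis by simp
qed

lemma cov_a: "integral\<^sup>L M (\<lambda>\<omega>. a k \<omega> * cnj (a l \<omega>)) = (if k = l then 1 else 0)"
proof (cases "k = l")
  case True
  have "integral\<^sup>L M (\<lambda>\<omega>. a k \<omega> * cnj (a k \<omega>)) = integral\<^sup>L M (\<lambda>\<omega>. complex_of_real ((cmod (a k \<omega>))\<^sup>2))"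
    by (intro Bochner_Integration.integral_cong) (auto simp: complex_mult_cnj cmod_power2)
  also have "\<dots> = complex_of_real (integral\<^sup>L M (\<lambda>\<omega>. (cmod (a k \<omega>))\<^sup>2))"
    by (rule integral_complex_of_real)
  also have "\<dots> = 1" using var_a[of k] by simp
  finally show ?thesis using True by simp
next
  case False
  define Y where "Y i = (if i = k then (\<lambda>z::complex. z) else cnj)" for i
  have ind: "indep_vars (\<lambda>_. borel) (\<lambda>i \<omega>. Y i (a i \<omega>)) {k, l}"
    by (rule indep_vars_subset[OF indep_vars_compose2[OF indep]]) (auto simp: Y_def)
  have "integral\<^sup>L M (\<lambda>\<omega>. \<Prod>i\<in>{k, l}. Y i (a i \<omega>)) = (\<Prod>i\<in>{k, l}. integral\<^sup>L M (\<lambda>\<omega>. Y i (a i \<omega>)))"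
    by (rule indep_vars_lebesgue_integral[OF _ ind]) (auto simp: Y_def int_a integrable_cnj)
  moreover have "(\<lambda>\<omega>. \<Prod>i\<in>{k, l}. Y i (a i \<omega>)) = (\<lambda>\<omega>. a k \<omega> * cnj (a l \<omega>))"
    using False by (auto simp: Y_def)
  ultimately have "integral\<^sup>L M (\<lambda>\<omega>. a k \<omega> * cnj (a l \<omega>)) = integral\<^sup>L M (a k) * integral\<^sup>L M (\<lambda>\<omega>. cnj (a l \<omega>))"
    using False by (simp add: Y_def)
  then show ?thesis using False by (simp add: mean_a)
qed


lemma suminf_le_norm_bound:
  fixes u :: "nat \<Rightarrow> 'b::real_normed_vector"
  assumes "summable (\<lambda>k. norm (u k))"
  shows "norm (u n) \<le> (\<Sum>k. norm (u k))"
proof -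
  have "(\<Sum>k\<in>{n}. norm (u k)) \<le> (\<Sum>k. norm (u k))"
    by (rule sum_le_suminf[OF assms]) auto
  then show ?thesis by simp
qed

lemma summable_prod_norm:
  fixes u v :: "nat \<Rightarrow> complex"
  assumes u: "summable (\<lambda>k. norm (u k))" and v: "summable (\<lambda>k. norm (v k))"
  shows "summable (\<lambda>k. norm (u k * cnj (v k)))"
proof (rule summable_comparison_test[where g="\<lambda>k. norm (u k) * (\<Sum>j. norm (v j))"])
  show "\<exists>N. \<forall>n\<ge>N. norm (norm (u n * cnj (v n))) \<le> norm (u n) * (\<Sum>j. norm (v j))"
    using suminf_le_norm_bound[OF v] by (auto simp: norm_mult intro!: mult_left_mono)
  show "summable (\<lambda>k. norm (u k) * (\<Sum>j. norm (v j)))" using u by (rule summable_mult2)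
qed

lemma ae_summable:
  assumes u: "summable (\<lambda>k. norm (u k))"
  shows "AE \<omega> in M. summable (\<lambda>k. norm (a k \<omega> * u k))"
proof -
  let ?F = "\<lambda>\<omega>. \<Sum>k. ennreal (cmod (a k \<omega>) * cmod (u k))"
  have mF: "?F \<in> borel_measurable M" by measurable
  have "(\<integral>\<^sup>+\<omega>. ?F \<omega> \<partial>M) = (\<Sum>k. \<integral>\<^sup>+\<omega>. ennreal (cmod (a k \<omega>) * cmod (u k)) \<partial>M)"
    by (rule nn_integral_suminf) measurable
  also have "\<dots> \<le> (\<Sum>k. ennreal (cmod (u k)))"
  proof (rule suminf_le)
    fix k
    have "(\<integral>\<^sup>+\<omega>. ennreal (cmod (a k \<omega>) * cmod (u k)) \<partial>M) = (\<integral>\<^sup>+\<omega>. ennreal (cmod (a k \<omega>)) \<partial>M) * ennreal (cmod (u k))"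
      by (subst ennreal_mult'', simp, rule nn_integral_multc, measurable)
    also have "\<dots> \<le> 1 * ennreal (cmod (u k))" by (intro mult_right_mono nn_abs_le) simp
    finally show "(\<integral>\<^sup>+\<omega>. ennreal (cmod (a k \<omega>) * cmod (u k)) \<partial>M) \<le> ennreal (cmod (u k))" by simp
  qed (rule summableI, rule summableI)
  also have "\<dots> = ennreal (\<Sum>k. cmod (u k))" by (rule suminf_ennreal2) (use u in auto)
  finally have "(\<integral>\<^sup>+\<omega>. ?F \<omega> \<partial>M) < \<infinity>" by (simp add: le_less_trans)
  then have "(\<integral>\<^sup>+\<omega>. ?F \<omega> \<partial>M) \<noteq> \<infinity>" by simp
  then have "AE \<omega> in M. ?F \<omega> \<noteq> \<infinity>" by (rule nn_integral_PInf_AE[OF mF])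
  then show ?thesis
  proof eventually_elim
    case (elim \<omega>)
    then have "summable (\<lambda>k. cmod (a k \<omega>) * cmod (u k))" by (intro summable_suminf_not_top) auto
    then show ?case by (simp add: norm_mult)
  qed
qed

lemma ae_lim:
  assumes u: "summable (\<lambda>k. norm (u k))"
  shows "AE \<omega> in M. (\<lambda>N. \<Sum>k<N. a k \<omega> * u k) \<longlonglongrightarrow> (\<Sum>k. a k \<omega> * u k)"
  using ae_summable[OF u] by eventually_elim (rule summable_LIMSEQ, rule summable_norm_cancel)

lemma nn_double:
  assumes c: "summable c" "\<And>k. 0 \<le> c k" and d: "summable d" "\<And>k. 0 \<le> d k"
  shows "(\<integral>\<^sup>+\<omega>. (\<Sum>k. ennreal (cmod (a k \<omega>) * c k)) * (\<Sum>l. ennreal (cmod (a l \<omega>) * d l)) \<partial>M) \<le> ennreal ((\<Sum>k. c k) * (\<Sum>l. d l))"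
proof -
  have eq: "(\<Sum>k. ennreal (cmod (a k \<omega>) * c k)) * (\<Sum>l. ennreal (cmod (a l \<omega>) * d l))
      = (\<Sum>k. \<Sum>l. ennreal (cmod (a k \<omega>) * cmod (a l \<omega>)) * ennreal (c k * d l))" for \<omega>
  proof -
    have "(\<Sum>k. ennreal (cmod (a k \<omega>) * c k)) * (\<Sum>l. ennreal (cmod (a l \<omega>) * d l))
        = (\<Sum>k. ennreal (cmod (a k \<omega>) * c k) * (\<Sum>l. ennreal (cmod (a l \<omega>) * d l)))"
      by (rule ennreal_suminf_multc[symmetric])
    also have "\<dots> = (\<Sum>k. \<Sum>l. ennreal (cmod (a k \<omega>) * c k) * ennreal (cmod (a l \<omega>) * d l))"
      by (simp only: ennreal_suminf_cmult[symmetric])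
    also have "\<dots> = (\<Sum>k. \<Sum>l. ennreal (cmod (a k \<omega>) * cmod (a l \<omega>)) * ennreal (c k * d l))"
      using c(2) d(2) by (simp add: ennreal_mult''[symmetric] mult_ac)
    finally show ?thesis .
  qed
  have "(\<integral>\<^sup>+\<omega>. (\<Sum>k. ennreal (cmod (a k \<omega>) * c k)) * (\<Sum>l. ennreal (cmod (a l \<omega>) * d l)) \<partial>M)
      = (\<Sum>k. \<Sum>l. (\<integral>\<^sup>+\<omega>. ennreal (cmod (a k \<omega>) * cmod (a l \<omega>)) \<partial>M) * ennreal (c k * d l))"
    unfolding eq by (subst nn_integral_suminf, measurable, subst nn_integral_suminf, measurable) (simp add: nn_integral_multc)
  also have "\<dots> \<le> (\<Sum>k. \<Sum>l. ennreal (c k * d l))"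
  proof -
    have le: "(\<integral>\<^sup>+\<omega>. ennreal (cmod (a k \<omega>) * cmod (a l \<omega>)) \<partial>M) * ennreal (c k * d l) \<le> ennreal (c k * d l)" for k l
      using mult_right_mono[OF nn_prod_le[of k l], of "ennreal (c k * d l)"] by simp
    show ?thesis by (intro suminf_le summableI le)
  qed
  also have "(\<lambda>k. \<Sum>l. ennreal (c k * d l)) = (\<lambda>k. ennreal (c k * (\<Sum>l. d l)))"
  proof
    fix k show "(\<Sum>l. ennreal (c k * d l)) = ennreal (c k * (\<Sum>l. d l))"
      using c(2) d by (subst suminf_ennreal2) (auto intro: summable_mult simp: suminf_mult)
  qed
  also have "(\<Sum>k. ennreal (c k * (\<Sum>l. d l))) = ennreal ((\<Sum>k. c k) * (\<Sum>l. d l))"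
    using c d by (subst suminf_ennreal2) (auto intro!: summable_mult2 mult_nonneg_nonneg suminf_nonneg simp: suminf_mult2)
  finally show ?thesis .
qed

lemma abs_partial_le:
  assumes "summable (\<lambda>k. norm (a k \<omega> * u k))"
  shows "norm (\<Sum>k<N. a k \<omega> * u k) \<le> (\<Sum>k. cmod (a k \<omega>) * cmod (u k))"
proof -
  have "norm (\<Sum>k<N. a k \<omega> * u k) \<le> (\<Sum>k<N. norm (a k \<omega> * u k))" by (rule norm_sum)
  also have "\<dots> \<le> (\<Sum>k. norm (a k \<omega> * u k))" by (rule sum_le_suminf[OF assms]) auto
  finally show ?thesis by (simp add: norm_mult)
qed

lemma moment2:
  assumes u: "summable (\<lambda>k. norm (u k))" and v: "summable (\<lambda>k. norm (v k))"
  shows "integrable M (\<lambda>\<omega>. (\<Sum>k. a k \<omega> * u k) * cnj (\<Sum>k. a k \<omega> * v k))"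
    and "integral\<^sup>L M (\<lambda>\<omega>. (\<Sum>k. a k \<omega> * u k) * cnj (\<Sum>k. a k \<omega> * v k)) = (\<Sum>k. u k * cnj (v k))"
proof -
  define s where "s N \<omega> = (\<Sum>k<N. a k \<omega> * u k) * cnj (\<Sum>k<N. a k \<omega> * v k)" for N \<omega>
  define f where "f \<omega> = (\<Sum>k. a k \<omega> * u k) * cnj (\<Sum>k. a k \<omega> * v k)" for \<omega>
  define w where "w \<omega> = (\<Sum>k. cmod (a k \<omega>) * cmod (u k)) * (\<Sum>k. cmod (a k \<omega>) * cmod (v k))" for \<omega>
  have ms: "s N \<in> borel_measurable M" for N unfolding s_def by measurable
  have mf: "f \<in> borel_measurable M" unfolding f_def by measurable
  have mw: "w \<in> borel_measurable M" unfolding w_def by measurable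
  have AEs: "AE \<omega> in M. summable (\<lambda>k. norm (a k \<omega> * u k)) \<and> summable (\<lambda>k. norm (a k \<omega> * v k))"
    using ae_summable[OF u] ae_summable[OF v] by eventually_elim simp
  have lim: "AE \<omega> in M. (\<lambda>N. s N \<omega>) \<longlonglongrightarrow> f \<omega>"
    using ae_lim[OF u] ae_lim[OF v] unfolding s_def f_def by eventually_elim (intro tendsto_intros)
  have bound: "AE \<omega> in M. norm (s N \<omega>) \<le> w \<omega>" for N
    using AEs
  proof eventually_elim
    case (elim \<omega>)
    then show ?case unfolding s_def w_def norm_mult complex_mod_cnj
      by (intro mult_mono abs_partial_le) (auto simp: norm_mult intro!: suminf_nonneg)
  qed
  have intw: "integrable M w"
  proof (rule integrableI_nonneg[OF mw])
    show "AE \<omega> in M. 0 \<le> w \<omega>" using AEs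
      by eventually_elim (auto simp: w_def norm_mult intro!: mult_nonneg_nonneg suminf_nonneg)
    have "AE \<omega> in M. ennreal (w \<omega>) = (\<Sum>k. ennreal (cmod (a k \<omega>) * cmod (u k))) * (\<Sum>l. ennreal (cmod (a l \<omega>) * cmod (v l)))"
      using AEs
    proof eventually_elim
      case (elim \<omega>)
      have A: "0 \<le> (\<Sum>k. cmod (a k \<omega>) * cmod (u k))" by (rule suminf_nonneg) (use elim in \<open>auto simp: norm_mult\<close>)
      have B: "0 \<le> (\<Sum>k. cmod (a k \<omega>) * cmod (v k))" by (rule suminf_nonneg) (use elim in \<open>auto simp: norm_mult\<close>)
      have eu: "ennreal (\<Sum>k. cmod (a k \<omega>) * cmod (u k)) = (\<Sum>k. ennreal (cmod (a k \<omega>) * cmod (u k)))"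
        by (rule suminf_ennreal2[symmetric]) (use elim in \<open>auto simp: norm_mult\<close>)
      have ev: "ennreal (\<Sum>k. cmod (a k \<omega>) * cmod (v k)) = (\<Sum>k. ennreal (cmod (a k \<omega>) * cmod (v k)))"
        by (rule suminf_ennreal2[symmetric]) (use elim in \<open>auto simp: norm_mult\<close>)
      show ?case unfolding w_def ennreal_mult''[OF B] eu ev ..
    qed
    then have "(\<integral>\<^sup>+\<omega>. ennreal (w \<omega>) \<partial>M) = (\<integral>\<^sup>+\<omega>. (\<Sum>k. ennreal (cmod (a k \<omega>) * cmod (u k))) * (\<Sum>l. ennreal (cmod (a l \<omega>) * cmod (v l))) \<partial>M)"
      by (rule nn_integral_cong_AE)
    also have "\<dots> \<le> ennreal ((\<Sum>k. cmod (u k)) * (\<Sum>l. cmod (v l)))"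
      by (rule nn_double) (use u v in auto)
    also have "\<dots> < \<infinity>" by simp
    finally show "(\<integral>\<^sup>+\<omega>. ennreal (w \<omega>) \<partial>M) < \<infinity>" .
  qed
  show "integrable M (\<lambda>\<omega>. (\<Sum>k. a k \<omega> * u k) * cnj (\<Sum>k. a k \<omega> * v k))"
    using integrable_dominated_convergence[OF mf ms intw lim bound] unfolding f_def .
  have L1: "(\<lambda>N. integral\<^sup>L M (s N)) \<longlonglongrightarrow> integral\<^sup>L M f"
    by (rule integral_dominated_convergence[OF mf ms intw lim bound])
  have sN: "integral\<^sup>L M (s N) = (\<Sum>k<N. u k * cnj (v k))" for N
  proof -
    have "s N \<omega> = (\<Sum>k<N. \<Sum>l<N. (u k * cnj (v l)) * (a k \<omega> * cnj (a l \<omega>)))" for \<omega>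
      unfolding s_def cnj_sum sum_product by (intro sum.cong refl) (simp add: mult_ac)
    then have "integral\<^sup>L M (s N) = integral\<^sup>L M (\<lambda>\<omega>. \<Sum>k<N. \<Sum>l<N. (u k * cnj (v l)) * (a k \<omega> * cnj (a l \<omega>)))"
      by (intro arg_cong[where f="integral\<^sup>L M"] ext) simp
    also have "\<dots> = (\<Sum>k<N. \<Sum>l<N. (u k * cnj (v l)) * integral\<^sup>L M (\<lambda>\<omega>. a k \<omega> * cnj (a l \<omega>)))"
      by (simp add: Bochner_Integration.integral_sum integrable_mult_right int_prod)
    also have "\<dots> = (\<Sum>k<N. \<Sum>l<N. if l = k then u k * cnj (v l) else 0)"
      by (intro sum.cong refl) (auto simp: cov_a)
    also have "\<dots> = (\<Sum>k<N. u k * cnj (v k))"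
      by (simp add: sum.delta)
    finally show ?thesis .
  qed
  have L2: "(\<lambda>N. integral\<^sup>L M (s N)) \<longlonglongrightarrow> (\<Sum>k. u k * cnj (v k))"
    unfolding sN by (rule summable_LIMSEQ, rule summable_norm_cancel, rule summable_prod_norm[OF u v])
  show "integral\<^sup>L M (\<lambda>\<omega>. (\<Sum>k. a k \<omega> * u k) * cnj (\<Sum>k. a k \<omega> * v k)) = (\<Sum>k. u k * cnj (v k))"
    using LIMSEQ_unique[OF L1 L2] unfolding f_def .
qed

lemma cis_sum: "finite I \<Longrightarrow> cis (\<Sum>i\<in>I. f i) = (\<Prod>i\<in>I. cis (f i))"
  by (induction I rule: finite_induct) (auto simp: cis_mult[symmetric])

lemma char_series:
  assumes d: "summable (\<lambda>k. norm (d k))"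
  shows "(CLINT \<omega>|M. cis (Re (\<Sum>k. a k \<omega> * d k))) = complex_of_real (exp (- (\<Sum>k. (cmod (d k))\<^sup>2) / 4))"
proof -
  define s where "s N \<omega> = cis (Re (\<Sum>k<N. a k \<omega> * d k))" for N \<omega>
  have ms: "s N \<in> borel_measurable M" for N unfolding s_def by measurable
  have mf: "(\<lambda>\<omega>. cis (Re (\<Sum>k. a k \<omega> * d k))) \<in> borel_measurable M" by measurable
  have int1: "integrable M (\<lambda>_. 1 :: real)" by simp
  have lim: "AE \<omega> in M. (\<lambda>N. s N \<omega>) \<longlonglongrightarrow> cis (Re (\<Sum>k. a k \<omega> * d k))"
    using ae_lim[OF d] unfolding s_def cis_conv_exp by eventually_elim (intro tendsto_intros)
  have bound: "AE \<omega> in M. norm (s N \<omega>) \<le> 1" for N by (simp add: s_def)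
  have L1: "(\<lambda>N. integral\<^sup>L M (s N)) \<longlonglongrightarrow> (CLINT \<omega>|M. cis (Re (\<Sum>k. a k \<omega> * d k)))"
    by (rule integral_dominated_convergence[OF mf ms int1 lim bound])
  have sN: "integral\<^sup>L M (s N) = complex_of_real (exp (- (\<Sum>k<N. (cmod (d k))\<^sup>2) / 4))" for N
  proof -
    define Y where "Y k z = cis (Re (z * d k))" for k z
    have ind: "indep_vars (\<lambda>_. borel) (\<lambda>k \<omega>. Y k (a k \<omega>)) {..<N}"
      by (rule indep_vars_subset[OF indep_vars_compose2[OF indep]]) (auto simp: Y_def)
    have "s N = (\<lambda>\<omega>. \<Prod>k<N. Y k (a k \<omega>))"
      unfolding s_def Y_def by (simp add: Re_sum cis_sum fun_eq_iff)
    then have "integral\<^sup>L M (s N) = (\<Prod>k<N. integral\<^sup>L M (\<lambda>\<omega>. Y k (a k \<omega>)))"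
      using indep_vars_lebesgue_integral[OF _ ind] by (simp add: Y_def integrable_const_bound[where B=1])
    also have "\<dots> = (\<Prod>k<N. complex_of_real (exp (- (cmod (d k))\<^sup>2 / 4)))"
    proof (intro prod.cong refl)
      fix k
      have "integral\<^sup>L M (\<lambda>\<omega>. Y k (a k \<omega>)) = (CLINT \<omega>|M. cis (Re (cnj (cnj (d k)) * a k \<omega>)))"
        unfolding Y_def by (simp add: mult.commute)
      also have "\<dots> = exp (- (cmod (cnj (d k)))\<^sup>2 / 4)" by (rule char_a)
      finally show "integral\<^sup>L M (\<lambda>\<omega>. Y k (a k \<omega>)) = complex_of_real (exp (- (cmod (d k))\<^sup>2 / 4))" by simp
    qed
    also have "\<dots> = complex_of_real (\<Prod>k<N. exp (- (cmod (d k))\<^sup>2 / 4))"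
      by simp
    also have "\<dots> = complex_of_real (exp (\<Sum>k<N. - (cmod (d k))\<^sup>2 / 4))"
      by (simp only: exp_sum[OF finite_lessThan])
    also have "\<dots> = complex_of_real (exp (- (\<Sum>k<N. (cmod (d k))\<^sup>2) / 4))"
      by (simp add: sum_negf sum_divide_distrib)
    finally show ?thesis .
  qed
  have sq: "summable (\<lambda>k. (cmod (d k))\<^sup>2)"
    using summable_prod_norm[OF d d] by (simp add: norm_mult power2_eq_square)
  have L2: "(\<lambda>N. integral\<^sup>L M (s N)) \<longlonglongrightarrow> complex_of_real (exp (- (\<Sum>k. (cmod (d k))\<^sup>2) / 4))"
    unfolding sN by (intro tendsto_intros summable_LIMSEQ sq) auto
  show ?thesis using LIMSEQ_unique[OF L1 L2] .
qed

end

lemma summable_lincomb: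
  fixes c :: "'w \<Rightarrow> complex" and u :: "'w \<Rightarrow> nat \<Rightarrow> complex"
  assumes "finite J" "\<And>w. w \<in> J \<Longrightarrow> summable (\<lambda>k. norm (u w k))"
  shows "summable (\<lambda>k. norm (\<Sum>w\<in>J. c w * u w k))"
proof (rule summable_comparison_test[where g="\<lambda>k. \<Sum>w\<in>J. norm (c w) * norm (u w k)"])
  show "\<exists>N. \<forall>n\<ge>N. norm (norm (\<Sum>w\<in>J. c w * u w n)) \<le> (\<Sum>w\<in>J. norm (c w) * norm (u w n))"
    by (auto intro!: order.trans[OF norm_sum] simp: norm_mult)
  show "summable (\<lambda>k. \<Sum>w\<in>J. norm (c w) * norm (u w k))"
    using assms(2) by (intro summable_sum summable_mult)
qed

context gseries
begin

lemma char_vec: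
  fixes J :: "'w set" and u :: "'w \<Rightarrow> nat \<Rightarrow> complex" and t :: "'w \<Rightarrow> complex"
  assumes J: "finite J" and u: "\<And>w. w \<in> J \<Longrightarrow> summable (\<lambda>k. norm (u w k))"
  shows "(CLINT \<omega>|M. cis (\<Sum>w\<in>J. Re (cnj (t w) * (\<Sum>k. a k \<omega> * u w k))))
    = complex_of_real (exp (- (\<Sum>k. (cmod (\<Sum>w\<in>J. cnj (t w) * u w k))\<^sup>2) / 4))"
proof -
  define d where "d k = (\<Sum>w\<in>J. cnj (t w) * u w k)" for k
  have d: "summable (\<lambda>k. norm (d k))" unfolding d_def by (rule summable_lincomb[OF J u])
  have AEs: "AE \<omega> in M. \<forall>w\<in>J. summable (\<lambda>k. norm (a k \<omega> * u w k))"
    using J u by (subst AE_finite_all) (auto intro: ae_summable)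
  have "(CLINT \<omega>|M. cis (\<Sum>w\<in>J. Re (cnj (t w) * (\<Sum>k. a k \<omega> * u w k))))
      = (CLINT \<omega>|M. cis (Re (\<Sum>k. a k \<omega> * d k)))"
  proof (rule integral_cong_AE)
    show "AE \<omega> in M. cis (\<Sum>w\<in>J. Re (cnj (t w) * (\<Sum>k. a k \<omega> * u w k))) = cis (Re (\<Sum>k. a k \<omega> * d k))"
      using AEs
    proof eventually_elim
      case (elim \<omega>)
      have s: "summable (\<lambda>k. a k \<omega> * u w k)" if "w \<in> J" for w
        using elim that by (auto intro: summable_norm_cancel)
      have "(\<Sum>w\<in>J. cnj (t w) * (\<Sum>k. a k \<omega> * u w k)) = (\<Sum>w\<in>J. \<Sum>k. cnj (t w) * (a k \<omega> * u w k))"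
        using s by (intro sum.cong refl) (simp add: suminf_mult)
      also have "\<dots> = (\<Sum>k. \<Sum>w\<in>J. cnj (t w) * (a k \<omega> * u w k))"
        using s by (intro suminf_sum[symmetric] summable_mult)
      also have "\<dots> = (\<Sum>k. a k \<omega> * d k)"
        unfolding d_def by (simp add: sum_distrib_left mult_ac)
      finally have "(\<Sum>w\<in>J. cnj (t w) * (\<Sum>k. a k \<omega> * u w k)) = (\<Sum>k. a k \<omega> * d k)" .
      then show ?case by (simp only: Re_sum[symmetric])
    qed
  qed measurable
  also have "\<dots> = complex_of_real (exp (- (\<Sum>k. (cmod (d k))\<^sup>2) / 4))" by (rule char_series[OF d])
  finally show ?thesis unfolding d_def .
qed

lemma quad_form:
  fixes J :: "'w set" and u :: "'w \<Rightarrow> nat \<Rightarrow> complex" and t :: "'w \<Rightarrow> complex"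
  assumes J: "finite J" and u: "\<And>w. w \<in> J \<Longrightarrow> summable (\<lambda>k. norm (u w k))"
  shows "complex_of_real (\<Sum>k. (cmod (\<Sum>w\<in>J. cnj (t w) * u w k))\<^sup>2)
    = (\<Sum>w\<in>J. \<Sum>w'\<in>J. cnj (t w) * t w' * (\<Sum>k. u w k * cnj (u w' k)))"
proof -
  define d where "d k = (\<Sum>w\<in>J. cnj (t w) * u w k)" for k
  have d: "summable (\<lambda>k. norm (d k))" unfolding d_def by (rule summable_lincomb[OF J u])
  have sq: "summable (\<lambda>k. (cmod (d k))\<^sup>2)"
    using summable_prod_norm[OF d d] by (simp add: norm_mult power2_eq_square)
  have pw: "summable (\<lambda>k. u w k * cnj (u w' k))" if "w \<in> J" "w' \<in> J" for w w'
    using summable_prod_norm[OF u[OF that(1)] u[OF that(2)]] by (rule summable_norm_cancel)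
  have "complex_of_real (\<Sum>k. (cmod (d k))\<^sup>2) = (\<Sum>k. complex_of_real ((cmod (d k))\<^sup>2))"
    by (rule sums_unique[OF sums_of_real[OF summable_sums[OF sq]]])
  also have "\<dots> = (\<Sum>k. \<Sum>w\<in>J. \<Sum>w'\<in>J. cnj (t w) * t w' * (u w k * cnj (u w' k)))"
  proof (rule suminf_cong)
    fix k
    have "complex_of_real ((cmod (d k))\<^sup>2) = d k * cnj (d k)" by (simp add: complex_mult_cnj cmod_power2)
    also have "\<dots> = (\<Sum>w\<in>J. \<Sum>w'\<in>J. cnj (t w) * t w' * (u w k * cnj (u w' k)))"
      unfolding d_def cnj_sum sum_product by (simp add: mult_ac)
    finally show "complex_of_real ((cmod (d k))\<^sup>2) = (\<Sum>w\<in>J. \<Sum>w'\<in>J. cnj (t w) * t w' * (u w k * cnj (u w' k)))" .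
  qed
  also have "\<dots> = (\<Sum>w\<in>J. \<Sum>k. \<Sum>w'\<in>J. cnj (t w) * t w' * (u w k * cnj (u w' k)))"
    by (rule suminf_sum) (use pw in \<open>auto intro!: summable_sum summable_mult\<close>)
  also have "\<dots> = (\<Sum>w\<in>J. \<Sum>w'\<in>J. \<Sum>k. cnj (t w) * t w' * (u w k * cnj (u w' k)))"
    by (intro sum.cong refl suminf_sum) (use pw in \<open>auto intro!: summable_mult\<close>)
  also have "\<dots> = (\<Sum>w\<in>J. \<Sum>w'\<in>J. cnj (t w) * t w' * (\<Sum>k. u w k * cnj (u w' k)))"
    by (intro sum.cong refl suminf_mult) (use pw in auto)
  finally show ?thesis unfolding d_def .
qed

lemma series_law:
  fixes J :: "'w set" and u v :: "'w \<Rightarrow> nat \<Rightarrow> complex"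
  assumes J: "finite J"
    and u: "\<And>w. w \<in> J \<Longrightarrow> summable (\<lambda>k. norm (u w k))"
    and v: "\<And>w. w \<in> J \<Longrightarrow> summable (\<lambda>k. norm (v w k))"
    and cov: "\<And>w w'. w \<in> J \<Longrightarrow> w' \<in> J \<Longrightarrow> (\<Sum>k. u w k * cnj (u w' k)) = (\<Sum>k. v w k * cnj (v w' k))"
  shows "distr M (PiM J (\<lambda>_. borel)) (\<lambda>\<omega>. \<lambda>w\<in>J. \<Sum>k. a k \<omega> * u w k)
       = distr M (PiM J (\<lambda>_. borel)) (\<lambda>\<omega>. \<lambda>w\<in>J. \<Sum>k. a k \<omega> * v w k)"
proof (rule char_unique_PiM_complex[OF J])
  have mF: "(\<lambda>\<omega>. \<lambda>w\<in>J. \<Sum>k. a k \<omega> * x w k) \<in> M \<rightarrow>\<^sub>M PiM J (\<lambda>_. borel :: complex measure)" for x :: "'w \<Rightarrow> nat \<Rightarrow> complex"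
    by (rule measurable_restrict) measurable
  show "finite_measure (distr M (PiM J (\<lambda>_. borel)) (\<lambda>\<omega>. \<lambda>w\<in>J. \<Sum>k. a k \<omega> * u w k))"
    by (rule finite_measure_distr[OF mF])
  show "finite_measure (distr M (PiM J (\<lambda>_. borel)) (\<lambda>\<omega>. \<lambda>w\<in>J. \<Sum>k. a k \<omega> * v w k))"
    by (rule finite_measure_distr[OF mF])
  fix t :: "'w \<Rightarrow> complex"
  have mt: "(\<lambda>y. cis (\<Sum>i\<in>J. Re (cnj (t i) * y i))) \<in> borel_measurable (PiM J (\<lambda>_. borel :: complex measure))"
    by measurable
  have ch: "(CLINT y|distr M (PiM J (\<lambda>_. borel)) (\<lambda>\<omega>. \<lambda>w\<in>J. \<Sum>k. a k \<omega> * x w k). cis (\<Sum>i\<in>J. Re (cnj (t i) * y i)))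
      = complex_of_real (exp (- (\<Sum>k. (cmod (\<Sum>w\<in>J. cnj (t w) * x w k))\<^sup>2) / 4))"
    if x: "\<And>w. w \<in> J \<Longrightarrow> summable (\<lambda>k. norm (x w k))" for x :: "'w \<Rightarrow> nat \<Rightarrow> complex"
  proof -
    have "(CLINT y|distr M (PiM J (\<lambda>_. borel)) (\<lambda>\<omega>. \<lambda>w\<in>J. \<Sum>k. a k \<omega> * x w k). cis (\<Sum>i\<in>J. Re (cnj (t i) * y i)))
        = (CLINT \<omega>|M. cis (\<Sum>i\<in>J. Re (cnj (t i) * (\<lambda>w\<in>J. \<Sum>k. a k \<omega> * x w k) i)))"
      by (rule integral_distr[OF mF mt])
    also have "\<dots> = (CLINT \<omega>|M. cis (\<Sum>i\<in>J. Re (cnj (t i) * (\<Sum>k. a k \<omega> * x i k))))"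
      by (intro Bochner_Integration.integral_cong refl arg_cong[where f=cis] sum.cong) auto
    also have "\<dots> = complex_of_real (exp (- (\<Sum>k. (cmod (\<Sum>w\<in>J. cnj (t w) * x w k))\<^sup>2) / 4))"
      by (rule char_vec[OF J x])
    finally show ?thesis .
  qed
  have qeq: "(\<Sum>k. (cmod (\<Sum>w\<in>J. cnj (t w) * u w k))\<^sup>2) = (\<Sum>k. (cmod (\<Sum>w\<in>J. cnj (t w) * v w k))\<^sup>2)"
  proof -
    have C: "(\<Sum>w\<in>J. \<Sum>w'\<in>J. cnj (t w) * t w' * (\<Sum>k. u w k * cnj (u w' k))) = (\<Sum>w\<in>J. \<Sum>w'\<in>J. cnj (t w) * t w' * (\<Sum>k. v w k * cnj (v w' k)))"
      using cov by (intro sum.cong refl) auto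
    have "complex_of_real (\<Sum>k. (cmod (\<Sum>w\<in>J. cnj (t w) * u w k))\<^sup>2) = complex_of_real (\<Sum>k. (cmod (\<Sum>w\<in>J. cnj (t w) * v w k))\<^sup>2)"
      by (rule trans[OF quad_form[OF J u, where t=t] trans[OF C quad_form[OF J v, where t=t, symmetric]]])
    then show ?thesis by simp
  qed
  show "(CLINT y|distr M (PiM J (\<lambda>_. borel)) (\<lambda>\<omega>. \<lambda>w\<in>J. \<Sum>k. a k \<omega> * u w k). cis (\<Sum>i\<in>J. Re (cnj (t i) * y i)))
      = (CLINT y|distr M (PiM J (\<lambda>_. borel)) (\<lambda>\<omega>. \<lambda>w\<in>J. \<Sum>k. a k \<omega> * v w k). cis (\<Sum>i\<in>J. Re (cnj (t i) * y i)))"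
  proof -
    have chu: "(CLINT y|distr M (PiM J (\<lambda>_. borel)) (\<lambda>\<omega>. \<lambda>w\<in>J. \<Sum>k. a k \<omega> * u w k). cis (\<Sum>i\<in>J. Re (cnj (t i) * y i)))
      = complex_of_real (exp (- (\<Sum>k. (cmod (\<Sum>w\<in>J. cnj (t w) * u w k))\<^sup>2) / 4))"
      by (rule ch) (rule u)
    have chv: "(CLINT y|distr M (PiM J (\<lambda>_. borel)) (\<lambda>\<omega>. \<lambda>w\<in>J. \<Sum>k. a k \<omega> * v w k). cis (\<Sum>i\<in>J. Re (cnj (t i) * y i)))
      = complex_of_real (exp (- (\<Sum>k. (cmod (\<Sum>w\<in>J. cnj (t w) * v w k))\<^sup>2) / 4))"
      by (rule ch) (rule v)
    show ?thesis unfolding chu chv qeq ..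
  qed
qed simp_all

end

definition Kc :: "complex \<Rightarrow> complex \<Rightarrow> complex" where
  "Kc p q = 1 / (1 - p * cnj q)"

definition Bl :: "(nat \<Rightarrow> complex) \<Rightarrow> nat \<Rightarrow> complex \<Rightarrow> complex" where
  "Bl zs n z = (\<Prod>j<n. blaschke (zs j) z)"

lemma unit_disk_iff: "z \<in> unit_disk \<longleftrightarrow> norm z < 1"
  by (simp add: unit_disk_def)

lemma one_minus_ne0: "norm p < 1 \<Longrightarrow> norm q < 1 \<Longrightarrow> 1 - p * cnj q \<noteq> 0"
proof
  assume "norm p < 1" "norm q < 1" "1 - p * cnj q = 0"
  then have "norm (p * cnj q) = 1" by (metis norm_one right_minus_eq)
  moreover have "norm (p * cnj q) < 1" using \<open>norm p < 1\<close> \<open>norm q < 1\<close>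
    by (simp add: norm_mult) (metis mult_strict_mono' norm_ge_zero mult_1_right less_le_trans less_eq_real_def mult_le_one)
  ultimately show False by simp
qed

lemma geom_sums:
  assumes "norm p < 1" "norm q < 1"
  shows "(\<lambda>k. p ^ k * cnj (q ^ k)) sums Kc p q"
proof -
  have n: "norm (p * cnj q) < 1" using assms
    by (simp add: norm_mult) (metis mult_strict_mono' norm_ge_zero mult_1_right less_le_trans less_eq_real_def mult_le_one)
  have "(\<lambda>k. p ^ k * cnj (q ^ k)) = (\<lambda>k. (p * cnj q) ^ k)" by (simp add: power_mult_distrib)
  then show ?thesis using geometric_sums[OF n] by (simp add: Kc_def)
qed

lemma geom_summable: "norm p < 1 \<Longrightarrow> norm q < 1 \<Longrightarrow> summable (\<lambda>k. p ^ k * cnj (q ^ k))"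
  using geom_sums by (rule sums_summable)

lemma geom_suminf: "norm p < 1 \<Longrightarrow> norm q < 1 \<Longrightarrow> (\<Sum>k. p ^ k * cnj (q ^ k)) = Kc p q"
  using geom_sums by (rule sums_unique[symmetric])

lemma geom_norm_summable: "norm (p::complex) < 1 \<Longrightarrow> summable (\<lambda>k. norm (p ^ k))"
proof -
  assume "norm p < 1"
  then have "summable (\<lambda>k. (norm p) ^ k)" by (intro summable_geometric) simp
  then show ?thesis by (simp add: norm_power)
qed

lemma lin_geom:
  assumes I: "finite I" and p: "\<And>i. i \<in> I \<Longrightarrow> norm (p i) < 1" and q: "norm q < 1"
  shows "summable (\<lambda>k. (\<Sum>i\<in>I. \<alpha> i * p i ^ k) * cnj (q ^ k))"
    and "(\<Sum>k. (\<Sum>i\<in>I. \<alpha> i * p i ^ k) * cnj (q ^ k)) = (\<Sum>i\<in>I. \<alpha> i * Kc (p i) q)"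
proof -
  have eq: "(\<lambda>k. (\<Sum>i\<in>I. \<alpha> i * p i ^ k) * cnj (q ^ k)) = (\<lambda>k. \<Sum>i\<in>I. \<alpha> i * (p i ^ k * cnj (q ^ k)))"
    by (simp add: sum_distrib_left sum_distrib_right mult_ac)
  have s: "summable (\<lambda>k. \<alpha> i * (p i ^ k * cnj (q ^ k)))" if "i \<in> I" for i
    using geom_summable[OF p[OF that] q] by (rule summable_mult)
  show "summable (\<lambda>k. (\<Sum>i\<in>I. \<alpha> i * p i ^ k) * cnj (q ^ k))"
    unfolding eq by (rule summable_sum) (rule s)
  have "(\<Sum>k. \<Sum>i\<in>I. \<alpha> i * (p i ^ k * cnj (q ^ k))) = (\<Sum>i\<in>I. \<Sum>k. \<alpha> i * (p i ^ k * cnj (q ^ k)))"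
    by (rule suminf_sum) (rule s)
  also have "\<dots> = (\<Sum>i\<in>I. \<alpha> i * Kc (p i) q)"
  proof (intro sum.cong refl)
    fix i assume i: "i \<in> I"
    show "(\<Sum>k. \<alpha> i * (p i ^ k * cnj (q ^ k))) = \<alpha> i * Kc (p i) q"
      using suminf_mult[OF geom_summable[OF p[OF i] q], of "\<alpha> i"] geom_suminf[OF p[OF i] q] by simp
  qed
  finally show "(\<Sum>k. (\<Sum>i\<in>I. \<alpha> i * p i ^ k) * cnj (q ^ k)) = (\<Sum>i\<in>I. \<alpha> i * Kc (p i) q)"
    unfolding eq .
qed

lemma blaschke_ident:
  assumes b: "norm \<beta> < 1" and w: "norm w < 1" and q: "norm q < 1"
  shows "Kc w q * (1 - blaschke \<beta> w * cnj (blaschke \<beta> q)) = (1 - \<beta> * cnj \<beta>) * Kc w \<beta> * Kc \<beta> q"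
proof -
  have n1: "1 - cnj \<beta> * w \<noteq> 0" using one_minus_ne0[OF w b] by (simp add: mult.commute)
  have n2: "1 - \<beta> * cnj q \<noteq> 0" using one_minus_ne0[OF b q] .
  have n3: "1 - w * cnj q \<noteq> 0" using one_minus_ne0[OF w q] .
  have n4: "1 - w * cnj \<beta> \<noteq> 0" using one_minus_ne0[OF w b] .
  have c: "cnj (blaschke \<beta> q) = (cnj q - cnj \<beta>) / (1 - \<beta> * cnj q)"
    by (simp add: blaschke_def)
  define D where "D = (1 - cnj \<beta> * w) * (1 - \<beta> * cnj q)"
  have D: "D \<noteq> 0" using n1 n2 by (simp add: D_def)
  have "blaschke \<beta> w * cnj (blaschke \<beta> q) = (w - \<beta>) * (cnj q - cnj \<beta>) / D"
    unfolding c by (simp add: blaschke_def D_def)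
  then have "1 - blaschke \<beta> w * cnj (blaschke \<beta> q) = (D - (w - \<beta>) * (cnj q - cnj \<beta>)) / D"
    using D by (simp add: diff_divide_distrib)
  also have "D - (w - \<beta>) * (cnj q - cnj \<beta>) = (1 - \<beta> * cnj \<beta>) * (1 - w * cnj q)"
    by (simp add: D_def algebra_simps)
  finally have e: "1 - blaschke \<beta> w * cnj (blaschke \<beta> q) = (1 - \<beta> * cnj \<beta>) * (1 - w * cnj q) / ((1 - cnj \<beta> * w) * (1 - \<beta> * cnj q))"
    by (simp add: D_def)
  have k1: "Kc w q * (1 - w * cnj q) = 1" using n3 by (simp add: Kc_def)
  have k2: "Kc w \<beta> * Kc \<beta> q = 1 / ((1 - cnj \<beta> * w) * (1 - \<beta> * cnj q))"
    by (simp add: Kc_def mult.commute)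
  have "Kc w q * (1 - blaschke \<beta> w * cnj (blaschke \<beta> q))
      = (1 - \<beta> * cnj \<beta>) * (Kc w q * (1 - w * cnj q)) / ((1 - cnj \<beta> * w) * (1 - \<beta> * cnj q))"
    unfolding e by (simp only: times_divide_eq_right mult.left_commute)
  also have "\<dots> = (1 - \<beta> * cnj \<beta>) * (Kc w \<beta> * Kc \<beta> q)"
    unfolding k1 k2 by simp
  finally show ?thesis by (simp only: mult.assoc)
qed

lemma blaschke_zero: "norm \<beta> < 1 \<Longrightarrow> norm z < 1 \<Longrightarrow> blaschke \<beta> z = 0 \<longleftrightarrow> z = \<beta>"
  using one_minus_ne0[of z \<beta>] by (auto simp: blaschke_def mult.commute)

lemma Bl_zero: "l < n \<Longrightarrow> Bl zs n (zs l) = 0"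
  unfolding Bl_def by (subst prod_zero_iff) (auto simp: blaschke_def intro!: bexI[where x=l])

lemma Bl_nonzero:
  assumes "\<forall>j<n. norm (zs j) < 1" "norm z < 1" "\<forall>j<n. zs j \<noteq> z"
  shows "Bl zs n z \<noteq> 0"
  using assms blaschke_zero by (auto simp: Bl_def)

lemma Bl_Suc: "Bl zs (Suc n) z = Bl zs n z * blaschke (zs n) z"
  by (simp add: Bl_def)

lemma Bl_ind:
  assumes "\<forall>j<n. norm (zs j) < 1" "inj_on zs {..<n}"
  shows "norm w < 1 \<Longrightarrow> \<exists>d. \<forall>q. norm q < 1 \<longrightarrow> Kc w q * (1 - Bl zs n w * cnj (Bl zs n q)) = (\<Sum>j<n. d j * Kc (zs j) q)"
  using assms
proof (induction n arbitrary: w)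
  case 0
  then show ?case by (auto simp: Bl_def)
next
  case (Suc n)
  let ?\<beta> = "zs n"
  have zs: "\<forall>j<n. norm (zs j) < 1" "inj_on zs {..<n}" using Suc.prems by (auto intro: inj_on_subset)
  have b: "norm ?\<beta> < 1" using Suc.prems by auto
  obtain d1 where d1: "\<And>q. norm q < 1 \<Longrightarrow> Kc w q * (1 - Bl zs n w * cnj (Bl zs n q)) = (\<Sum>j<n. d1 j * Kc (zs j) q)"
    using Suc.IH[OF Suc.prems(1) zs] by blast
  obtain d2 where d2: "\<And>q. norm q < 1 \<Longrightarrow> Kc ?\<beta> q * (1 - Bl zs n ?\<beta> * cnj (Bl zs n q)) = (\<Sum>j<n. d2 j * Kc (zs j) q)"
    using Suc.IH[OF b zs] by blast
  have neq: "\<forall>j<n. zs j \<noteq> ?\<beta>" using Suc.prems(3) by (auto simp: inj_on_def)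
  have Bb: "Bl zs n ?\<beta> \<noteq> 0" by (rule Bl_nonzero[OF zs(1) b neq])
  define C where "C = Bl zs n w * (1 - ?\<beta> * cnj ?\<beta>) * Kc w ?\<beta> / Bl zs n ?\<beta>"
  define d where "d j = (if j = n then C else d1 j - C * d2 j)" for j
  show ?case
  proof (intro exI allI impI)
    fix q :: complex assume q: "norm q < 1"
    have key: "cnj (Bl zs n q) * Kc ?\<beta> q = (Kc ?\<beta> q - (\<Sum>j<n. d2 j * Kc (zs j) q)) / Bl zs n ?\<beta>"
      using d2[OF q] Bb by (simp add: field_simps)
    have "Kc w q * (1 - Bl zs (Suc n) w * cnj (Bl zs (Suc n) q))
        = Kc w q * (1 - Bl zs n w * cnj (Bl zs n q))
          + Bl zs n w * cnj (Bl zs n q) * (Kc w q * (1 - blaschke ?\<beta> w * cnj (blaschke ?\<beta> q)))"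
      unfolding Bl_Suc by (simp add: algebra_simps)
    also have "\<dots> = (\<Sum>j<n. d1 j * Kc (zs j) q)
          + Bl zs n w * cnj (Bl zs n q) * ((1 - ?\<beta> * cnj ?\<beta>) * Kc w ?\<beta> * Kc ?\<beta> q)"
      unfolding d1[OF q] blaschke_ident[OF b Suc.prems(1) q] ..
    also have "\<dots> = (\<Sum>j<n. d1 j * Kc (zs j) q) + C * (Kc ?\<beta> q - (\<Sum>j<n. d2 j * Kc (zs j) q))"
    proof -
      have "Bl zs n w * cnj (Bl zs n q) * ((1 - ?\<beta> * cnj ?\<beta>) * Kc w ?\<beta> * Kc ?\<beta> q)
          = Bl zs n w * (1 - ?\<beta> * cnj ?\<beta>) * Kc w ?\<beta> * (cnj (Bl zs n q) * Kc ?\<beta> q)"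
        by (simp add: mult_ac)
      also have "\<dots> = C * (Kc ?\<beta> q - (\<Sum>j<n. d2 j * Kc (zs j) q))"
        unfolding key C_def by simp
      finally show ?thesis by simp
    qed
    also have "\<dots> = (\<Sum>j<n. (d1 j - C * d2 j) * Kc (zs j) q) + C * Kc ?\<beta> q"
      by (simp add: algebra_simps sum_subtractf sum_distrib_left)
    also have "\<dots> = (\<Sum>j<Suc n. d j * Kc (zs j) q)"
      by (simp add: d_def)
    finally show "Kc w q * (1 - Bl zs (Suc n) w * cnj (Bl zs (Suc n) q)) = (\<Sum>j<Suc n. d j * Kc (zs j) q)" .
  qed
qed

lemma G_eval:
  fixes zs :: "nat \<Rightarrow> complex" and n :: nat
  assumes zs: "\<forall>j<n. norm (zs j) < 1" and w: "norm w < 1" and q: "norm q < 1"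
  shows "summable (\<lambda>k. (w ^ k - (\<Sum>j<n. c j * zs j ^ k)) * cnj (q ^ k))"
    and "(\<Sum>k. (w ^ k - (\<Sum>j<n. c j * zs j ^ k)) * cnj (q ^ k)) = Kc w q - (\<Sum>j<n. c j * Kc (zs j) q)"
proof -
  have s1: "summable (\<lambda>k. w ^ k * cnj (q ^ k))" by (rule geom_summable[OF w q])
  have s2: "summable (\<lambda>k. (\<Sum>j<n. c j * zs j ^ k) * cnj (q ^ k))"
    by (rule lin_geom(1)) (use zs q in auto)
  have eq: "(\<lambda>k. (w ^ k - (\<Sum>j<n. c j * zs j ^ k)) * cnj (q ^ k)) = (\<lambda>k. w ^ k * cnj (q ^ k) - (\<Sum>j<n. c j * zs j ^ k) * cnj (q ^ k))"
    by (simp add: left_diff_distrib)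
  show "summable (\<lambda>k. (w ^ k - (\<Sum>j<n. c j * zs j ^ k)) * cnj (q ^ k))"
    unfolding eq by (rule summable_diff[OF s1 s2])
  have "(\<Sum>k. (w ^ k - (\<Sum>j<n. c j * zs j ^ k)) * cnj (q ^ k)) = (\<Sum>k. w ^ k * cnj (q ^ k)) - (\<Sum>k. (\<Sum>j<n. c j * zs j ^ k) * cnj (q ^ k))"
    unfolding eq by (rule suminf_diff[OF s1 s2, symmetric])
  also have "\<dots> = Kc w q - (\<Sum>j<n. c j * Kc (zs j) q)"
    using geom_suminf[OF w q] lin_geom(2)[of "{..<n}" zs q c] zs q by simp
  finally show "(\<Sum>k. (w ^ k - (\<Sum>j<n. c j * zs j ^ k)) * cnj (q ^ k)) = Kc w q - (\<Sum>j<n. c j * Kc (zs j) q)" .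
qed

lemma cov_identity:
  fixes zs :: "nat \<Rightarrow> complex" and n :: nat
  assumes zs: "\<forall>j<n. norm (zs j) < 1" "inj_on zs {..<n}" and w: "norm w < 1" and w': "norm w' < 1"
    and hyp: "\<forall>l<n. (\<Sum>k. (w ^ k - (\<Sum>j<n. c j * zs j ^ k)) * cnj (zs l ^ k)) = 0"
  shows "(\<Sum>k. (w ^ k - (\<Sum>j<n. c j * zs j ^ k)) * cnj (w' ^ k)) = Bl zs n w * cnj (Bl zs n w') * Kc w w'"
proof -
  obtain d where d: "\<And>q. norm q < 1 \<Longrightarrow> Kc w q * (1 - Bl zs n w * cnj (Bl zs n q)) = (\<Sum>j<n. d j * Kc (zs j) q)"
    using Bl_ind[OF zs w] by blast
  define e where "e j = c j - d j" for j
  have E1: "(\<Sum>j<n. e j * Kc (zs j) (zs l)) = 0" if l: "l < n" for l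
  proof -
    have zl: "norm (zs l) < 1" using zs l by auto
    have a: "Kc w (zs l) - (\<Sum>j<n. c j * Kc (zs j) (zs l)) = 0"
      using hyp l G_eval(2)[OF zs(1) w zl, of c] by simp
    have b: "Kc w (zs l) = (\<Sum>j<n. d j * Kc (zs j) (zs l))"
      using d[OF zl] Bl_zero[OF l, of zs] by simp
    have "(\<Sum>j<n. e j * Kc (zs j) (zs l)) = (\<Sum>j<n. c j * Kc (zs j) (zs l)) - (\<Sum>j<n. d j * Kc (zs j) (zs l))"
      by (simp add: e_def left_diff_distrib sum_subtractf)
    then show ?thesis using a b by simp
  qed
  define h where "h k = (\<Sum>j<n. e j * zs j ^ k)" for k
  have H1s: "summable (\<lambda>k. h k * cnj (q ^ k))" if "norm q < 1" for q
    unfolding h_def by (rule lin_geom(1)) (use zs that in auto)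
  have H1: "(\<Sum>k. h k * cnj (q ^ k)) = (\<Sum>j<n. e j * Kc (zs j) q)" if "norm q < 1" for q
    unfolding h_def by (rule lin_geom(2)) (use zs that in auto)
  have hh: "(\<lambda>k. h k * cnj (h k)) = (\<lambda>k. \<Sum>l<n. cnj (e l) * (h k * cnj (zs l ^ k)))"
  proof
    fix k
    have "cnj (h k) = (\<Sum>l<n. cnj (e l) * cnj (zs l ^ k))" by (simp add: h_def cnj_sum)
    then show "h k * cnj (h k) = (\<Sum>l<n. cnj (e l) * (h k * cnj (zs l ^ k)))"
      by (simp add: sum_distrib_left mult_ac)
  qed
  have sl: "summable (\<lambda>k. cnj (e l) * (h k * cnj (zs l ^ k)))" if "l < n" for l
    using H1s[of "zs l"] zs that by (intro summable_mult) auto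
  have Ss: "summable (\<lambda>k. h k * cnj (h k))" unfolding hh by (rule summable_sum) (use sl in auto)
  have H2: "(\<Sum>k. h k * cnj (h k)) = 0"
  proof -
    have "(\<Sum>k. h k * cnj (h k)) = (\<Sum>l<n. \<Sum>k. cnj (e l) * (h k * cnj (zs l ^ k)))"
      unfolding hh by (rule suminf_sum) (use sl in auto)
    also have "\<dots> = (\<Sum>l<n. cnj (e l) * (\<Sum>j<n. e j * Kc (zs j) (zs l)))"
    proof (intro sum.cong refl)
      fix l assume l: "l \<in> {..<n}"
      then have zl: "norm (zs l) < 1" using zs by auto
      show "(\<Sum>k. cnj (e l) * (h k * cnj (zs l ^ k))) = cnj (e l) * (\<Sum>j<n. e j * Kc (zs j) (zs l))"
        using suminf_mult[OF H1s[OF zl], of "cnj (e l)"] H1[OF zl] by simp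
    qed
    also have "\<dots> = 0" using E1 by simp
    finally show ?thesis .
  qed
  have H3: "h k = 0" for k
  proof -
    have sR: "summable (\<lambda>k. Re (h k * cnj (h k)))" using Ss by (rule summable_Re)
    have "(\<Sum>k. Re (h k * cnj (h k))) = Re (\<Sum>k. h k * cnj (h k))" using Re_suminf[OF Ss] by simp
    then have "(\<Sum>k. Re (h k * cnj (h k))) = 0" using H2 by simp
    then have "\<forall>k. Re (h k * cnj (h k)) = 0"
      using suminf_eq_zero_iff[OF sR] by (simp add: complex_mult_cnj)
    then have "Re (h k * cnj (h k)) = 0" by blast
    then show ?thesis by (simp add: complex_mult_cnj) (metis complex_eq_iff zero_complex.simps power2_eq_square
        add_nonneg_eq_0_iff zero_le_power2 power_eq_0_iff zero_neq_numeral)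
  qed
  have H4: "(\<Sum>j<n. e j * Kc (zs j) w') = 0" using H1[OF w'] H3 by simp
  have "(\<Sum>k. (w ^ k - (\<Sum>j<n. c j * zs j ^ k)) * cnj (w' ^ k)) = Kc w w' - (\<Sum>j<n. c j * Kc (zs j) w')"
    by (rule G_eval(2)[OF zs(1) w w'])
  also have "(\<Sum>j<n. c j * Kc (zs j) w') = (\<Sum>j<n. d j * Kc (zs j) w') + (\<Sum>j<n. e j * Kc (zs j) w')"
    by (simp add: e_def algebra_simps sum.distrib[symmetric])
  also have "\<dots> = Kc w w' * (1 - Bl zs n w * cnj (Bl zs n w'))" using d[OF w'] H4 by simp
  finally show ?thesis by (simp add: algebra_simps)
qed

lemma distr_prod_emb:
  fixes f :: "'a \<Rightarrow> 'i \<Rightarrow> 'b"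
  assumes F: "(\<lambda>\<omega>. \<lambda>z\<in>U. f \<omega> z) \<in> M \<rightarrow>\<^sub>M PiM U (\<lambda>_. N)" and J: "J \<subseteq> U"
    and X: "X \<in> sets (PiM J (\<lambda>_. N))"
  shows "emeasure (distr M (PiM U (\<lambda>_. N)) (\<lambda>\<omega>. \<lambda>z\<in>U. f \<omega> z)) (prod_emb U (\<lambda>_. N) J X)
       = emeasure (distr M (PiM J (\<lambda>_. N)) (\<lambda>\<omega>. \<lambda>z\<in>J. f \<omega> z)) X"
proof -
  have FJ: "(\<lambda>\<omega>. \<lambda>z\<in>J. f \<omega> z) \<in> M \<rightarrow>\<^sub>M PiM J (\<lambda>_. N)"
  proof -
    have "(\<lambda>\<omega>. restrict (\<lambda>z\<in>U. f \<omega> z) J) \<in> M \<rightarrow>\<^sub>M PiM J (\<lambda>_. N)"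
      by (rule measurable_compose[OF F measurable_restrict_subset[OF J]])
    moreover have "(\<lambda>\<omega>. restrict (\<lambda>z\<in>U. f \<omega> z) J) = (\<lambda>\<omega>. \<lambda>z\<in>J. f \<omega> z)"
      using J by (auto simp: restrict_def fun_eq_iff)
    ultimately show ?thesis by simp
  qed
  have sp: "\<And>\<omega>. \<omega> \<in> space M \<Longrightarrow> (\<lambda>z\<in>U. f \<omega> z) \<in> space (PiM U (\<lambda>_. N))"
    using F by (auto dest: measurable_space)
  have pre: "(\<lambda>\<omega>. \<lambda>z\<in>U. f \<omega> z) -` prod_emb U (\<lambda>_. N) J X \<inter> space M = (\<lambda>\<omega>. \<lambda>z\<in>J. f \<omega> z) -` X \<inter> space M"
  proof -
    have "restrict (\<lambda>z\<in>U. f \<omega> z) J = (\<lambda>z\<in>J. f \<omega> z)" for \<omega>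
      using J by (auto simp: restrict_def fun_eq_iff)
    then show ?thesis using sp by (auto simp: prod_emb_iff space_PiM PiE_iff)
  qed
  show ?thesis
    using F FJ X J by (simp add: emeasure_distr pre)
qed

lemma GAF_measurable[measurable]:
  assumes "\<And>k. a k \<in> borel_measurable M"
  shows "(\<lambda>\<omega>. GAF a \<omega> z) \<in> borel_measurable M"
  unfolding GAF_def using assms by measurable

theorem proposition12:
  fixes M :: "'a measure" and a :: "nat \<Rightarrow> 'a \<Rightarrow> complex"
    and n :: nat and zs :: "nat \<Rightarrow> complex" and g :: "'a \<Rightarrow> complex \<Rightarrow> complex"
  assumes "prob_space M"
    and "prob_space.indep_vars M (\<lambda>_. borel) a UNIV"
    and "\<forall>k. distributed M lborel (a k) std_cgauss_density"
    and "\<forall>j<n. zs j \<in> unit_disk"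
    and "inj_on zs {..<n}"
    and "conditioned_process M (GAF a) zs n g"
  shows "distr M (PiM unit_disk (\<lambda>_. borel))
           (\<lambda>\<omega>. \<lambda>z\<in>unit_disk. (\<Prod>j<n. blaschke (zs j) z) * GAF a \<omega> z)
       = distr M (PiM unit_disk (\<lambda>_. borel)) (\<lambda>\<omega>. \<lambda>z\<in>unit_disk. g \<omega> z)"
proof -
  have gs: "gseries M a"
    unfolding gseries_def gseries_axioms_def using assms(1-3) by auto
  interpret gseries M a by (rule gs)
  let ?U = "unit_disk"
  have zsU: "\<forall>j<n. norm (zs j) < 1" using assms(4) by (simp add: unit_disk_iff)
  have injz: "inj_on zs {..<n}" by (rule assms(5))
  have cp: "\<forall>z\<in>?U. (\<lambda>\<omega>. g \<omega> z) \<in> borel_measurable M \<and>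
        (\<exists>c :: nat \<Rightarrow> complex. (AE \<omega> in M. g \<omega> z = GAF a \<omega> z - (\<Sum>j<n. c j * GAF a \<omega> (zs j)))) \<and>
        (\<forall>k<n. L2_inner M (\<lambda>\<omega>. g \<omega> z) (\<lambda>\<omega>. GAF a \<omega> (zs k)) = 0)"
    using assms(6) by (simp add: conditioned_process_def)
  have "\<forall>z\<in>?U. \<exists>c :: nat \<Rightarrow> complex. AE \<omega> in M. g \<omega> z = GAF a \<omega> z - (\<Sum>j<n. c j * GAF a \<omega> (zs j))"
    using cp by blast
  from bchoice[OF this] obtain C where C0: "\<forall>z\<in>?U. AE \<omega> in M. g \<omega> z = GAF a \<omega> z - (\<Sum>j<n. C z j * GAF a \<omega> (zs j))"
    by blast
  have C: "\<And>z. z \<in> ?U \<Longrightarrow> AE \<omega> in M. g \<omega> z = GAF a \<omega> z - (\<Sum>j<n. C z j * GAF a \<omega> (zs j))"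
    using C0 by blast
  have mg: "\<And>z. z \<in> ?U \<Longrightarrow> (\<lambda>\<omega>. g \<omega> z) \<in> borel_measurable M" using cp by blast
  have orth: "\<And>z k. z \<in> ?U \<Longrightarrow> k < n \<Longrightarrow> L2_inner M (\<lambda>\<omega>. g \<omega> z) (\<lambda>\<omega>. GAF a \<omega> (zs k)) = 0"
    using cp by blast
  define B where "B z = Bl zs n z" for z
  have Beq: "(\<Prod>j<n. blaschke (zs j) z) = B z" for z by (simp add: B_def Bl_def)
  define u where "u z k = B z * z ^ k" for z k
  define v where "v z k = z ^ k - (\<Sum>j<n. C z j * zs j ^ k)" for z k
  define \<phi> where "\<phi> p k = p ^ k" for p :: complex and k :: nat
  have sphi: "summable (\<lambda>k. norm (\<phi> p k))" if "norm p < 1" for p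
    unfolding \<phi>_def by (rule geom_norm_summable[OF that])
  have su: "summable (\<lambda>k. norm (u z k))" if "norm z < 1" for z
    unfolding u_def norm_mult using geom_norm_summable[OF that] by (rule summable_mult)
  have sC: "summable (\<lambda>k. norm (\<Sum>j<n. C z j * zs j ^ k))" for z
    by (rule summable_lincomb) (use zsU geom_norm_summable in auto)
  have sv: "summable (\<lambda>k. norm (v z k))" if "norm z < 1" for z
  proof (rule summable_comparison_test[where g="\<lambda>k. norm (z ^ k) + norm (\<Sum>j<n. C z j * zs j ^ k)"])
    show "\<exists>N. \<forall>k\<ge>N. norm (norm (v z k)) \<le> norm (z ^ k) + norm (\<Sum>j<n. C z j * zs j ^ k)"
      unfolding v_def by (auto intro: norm_triangle_ineq4)
    show "summable (\<lambda>k. norm (z ^ k) + norm (\<Sum>j<n. C z j * zs j ^ k))"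
      by (rule summable_add[OF geom_norm_summable[OF that] sC])
  qed
  have AEphi: "AE \<omega> in M. summable (\<lambda>k. norm (a k \<omega> * p ^ k))" if "norm p < 1" for p
    using ae_summable[OF sphi[OF that]] by (simp add: \<phi>_def)
  have AEL: "AE \<omega> in M. B z * GAF a \<omega> z = (\<Sum>k. a k \<omega> * u z k)" if "norm z < 1" for z
    using AEphi[OF that]
  proof eventually_elim
    case (elim \<omega>)
    then have s: "summable (\<lambda>k. a k \<omega> * z ^ k)" by (rule summable_norm_cancel)
    have "(\<Sum>k. a k \<omega> * u z k) = (\<Sum>k. B z * (a k \<omega> * z ^ k))"
      unfolding u_def by (simp only: mult.left_commute)
    also have "\<dots> = B z * (\<Sum>k. a k \<omega> * z ^ k)" by (rule suminf_mult[OF s])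
    finally show ?case unfolding GAF_def by simp
  qed
  have AER: "AE \<omega> in M. g \<omega> z = (\<Sum>k. a k \<omega> * v z k)" if z: "z \<in> ?U" for z
  proof -
    have nz: "norm z < 1" using z by (simp add: unit_disk_iff)
    have "AE \<omega> in M. \<forall>j\<in>{..<n}. summable (\<lambda>k. norm (a k \<omega> * zs j ^ k))"
      using zsU by (subst AE_finite_all) (auto intro!: AEphi)
    then show ?thesis using C[OF z] AEphi[OF nz]
    proof eventually_elim
      case (elim \<omega>)
      have s0: "summable (\<lambda>k. a k \<omega> * z ^ k)" using elim(3) by (rule summable_norm_cancel)
      have sj0: "summable (\<lambda>k. a k \<omega> * zs j ^ k)" if "j < n" for j
        by (rule summable_norm_cancel) (use elim(1) that in auto)
      have sj: "summable (\<lambda>k. C z j * (a k \<omega> * zs j ^ k))" if "j < n" for j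
        using sj0[OF that] by (rule summable_mult)
      have "(\<Sum>k. a k \<omega> * v z k) = (\<Sum>k. a k \<omega> * z ^ k - (\<Sum>j<n. C z j * (a k \<omega> * zs j ^ k)))"
        unfolding v_def by (simp add: right_diff_distrib sum_distrib_left mult_ac)
      also have "\<dots> = (\<Sum>k. a k \<omega> * z ^ k) - (\<Sum>k. \<Sum>j<n. C z j * (a k \<omega> * zs j ^ k))"
        by (rule suminf_diff[symmetric, OF s0 summable_sum]) (use sj in auto)
      also have "(\<Sum>k. \<Sum>j<n. C z j * (a k \<omega> * zs j ^ k)) = (\<Sum>j<n. \<Sum>k. C z j * (a k \<omega> * zs j ^ k))"
        by (rule suminf_sum) (use sj in auto)
      also have "\<dots> = (\<Sum>j<n. C z j * GAF a \<omega> (zs j))"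
        unfolding GAF_def
      proof (rule sum.cong[OF refl])
        fix j assume "j \<in> {..<n}"
        then show "(\<Sum>k. C z j * (a k \<omega> * zs j ^ k)) = C z j * (\<Sum>k. a k \<omega> * zs j ^ k)"
          using suminf_mult[OF sj0, of j "C z j"] by simp
      qed
      finally show ?case using elim(2) unfolding GAF_def by simp
    qed
  qed
  have nU: "\<And>z. z \<in> ?U \<Longrightarrow> norm z < 1" by (simp add: unit_disk_iff)
  have orth2: "(\<Sum>k. v z k * cnj (zs l ^ k)) = 0" if z: "z \<in> ?U" and l: "l < n" for z l
  proof -
    have zl: "norm (zs l) < 1" using zsU l by auto
    have "L2_inner M (\<lambda>\<omega>. g \<omega> z) (\<lambda>\<omega>. GAF a \<omega> (zs l))
        = integral\<^sup>L M (\<lambda>\<omega>. (\<Sum>k. a k \<omega> * v z k) * cnj (\<Sum>k. a k \<omega> * \<phi> (zs l) k))"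
      unfolding L2_inner_def
    proof (rule integral_cong_AE)
      show "(\<lambda>\<omega>. g \<omega> z * cnj (GAF a \<omega> (zs l))) \<in> borel_measurable M"
        using mg[OF z] by measurable
      show "(\<lambda>\<omega>. (\<Sum>k. a k \<omega> * v z k) * cnj (\<Sum>k. a k \<omega> * \<phi> (zs l) k)) \<in> borel_measurable M"
        by measurable
      show "AE \<omega> in M. g \<omega> z * cnj (GAF a \<omega> (zs l)) = (\<Sum>k. a k \<omega> * v z k) * cnj (\<Sum>k. a k \<omega> * \<phi> (zs l) k)"
        using AER[OF z] by eventually_elim (simp add: GAF_def \<phi>_def)
    qed
    also have "\<dots> = (\<Sum>k. v z k * cnj (\<phi> (zs l) k))"
      by (rule moment2(2)[OF sv[OF nU[OF z]] sphi[OF zl]])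
    finally show ?thesis using orth[OF z l] by (simp add: \<phi>_def)
  qed
  have covv: "(\<Sum>k. v w k * cnj (v w' k)) = B w * cnj (B w') * Kc w w'" if w: "w \<in> ?U" and w': "w' \<in> ?U" for w w'
  proof -
    have nw: "norm w < 1" and nw': "norm w' < 1" using nU w w' by auto
    have hyp: "\<forall>l<n. (\<Sum>k. (w ^ k - (\<Sum>j<n. C w j * zs j ^ k)) * cnj (zs l ^ k)) = 0"
      using orth2[OF w] by (simp add: v_def)
    have ci: "(\<Sum>k. (w ^ k - (\<Sum>j<n. C w j * zs j ^ k)) * cnj (w' ^ k)) = Bl zs n w * cnj (Bl zs n w') * Kc w w'"
      by (rule cov_identity[OF zsU injz nw nw' hyp])
    have sq: "summable (\<lambda>k. v w k * cnj (q ^ k))" if "norm q < 1" for q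
      unfolding v_def by (rule G_eval(1)[OF zsU nw that])
    have sj: "summable (\<lambda>k. cnj (C w' j) * (v w k * cnj (zs j ^ k)))" if "j < n" for j
      using sq[of "zs j"] zsU that by (intro summable_mult) auto
    have eq: "(\<lambda>k. v w k * cnj (v w' k)) = (\<lambda>k. v w k * cnj (w' ^ k) - (\<Sum>j<n. cnj (C w' j) * (v w k * cnj (zs j ^ k))))"
      by (auto simp: v_def[of w'] cnj_sum sum_distrib_left right_diff_distrib mult_ac fun_eq_iff)
    have "(\<Sum>k. v w k * cnj (v w' k)) = (\<Sum>k. v w k * cnj (w' ^ k)) - (\<Sum>k. \<Sum>j<n. cnj (C w' j) * (v w k * cnj (zs j ^ k)))"
      unfolding eq by (rule suminf_diff[symmetric, OF sq[OF nw'] summable_sum]) (use sj in auto)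
    also have "(\<Sum>k. \<Sum>j<n. cnj (C w' j) * (v w k * cnj (zs j ^ k))) = (\<Sum>j<n. \<Sum>k. cnj (C w' j) * (v w k * cnj (zs j ^ k)))"
      by (rule suminf_sum) (use sj in auto)
    also have "\<dots> = 0"
    proof (rule sum.neutral, rule ballI)
      fix j assume j: "j \<in> {..<n}"
      have zj: "norm (zs j) < 1" using zsU j by auto
      show "(\<Sum>k. cnj (C w' j) * (v w k * cnj (zs j ^ k))) = 0"
        using suminf_mult[OF sq[OF zj], of "cnj (C w' j)"] orth2[OF w, of j] j by simp
    qed
    finally show ?thesis using ci by (simp add: v_def B_def)
  qed
  have covu: "(\<Sum>k. u w k * cnj (u w' k)) = B w * cnj (B w') * Kc w w'" if w: "w \<in> ?U" and w': "w' \<in> ?U" for w w'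
  proof -
    have nw: "norm w < 1" and nw': "norm w' < 1" using nU w w' by auto
    have "(\<Sum>k. u w k * cnj (u w' k)) = (\<Sum>k. (B w * cnj (B w')) * (w ^ k * cnj (w' ^ k)))"
      unfolding u_def by (simp add: mult_ac)
    also have "\<dots> = (B w * cnj (B w')) * Kc w w'"
      using suminf_mult[OF geom_summable[OF nw nw'], of "B w * cnj (B w')"] geom_suminf[OF nw nw'] by simp
    finally show ?thesis .
  qed
  have fin: "distr M (PiM J (\<lambda>_. borel)) (\<lambda>\<omega>. \<lambda>z\<in>J. B z * GAF a \<omega> z) = distr M (PiM J (\<lambda>_. borel)) (\<lambda>\<omega>. \<lambda>z\<in>J. g \<omega> z)"
    if J: "finite J" "J \<subseteq> ?U" for J
  proof -
    have mS: "(\<lambda>\<omega>. \<lambda>z\<in>J. \<Sum>k. a k \<omega> * x z k) \<in> M \<rightarrow>\<^sub>M PiM J (\<lambda>_. borel :: complex measure)" for x :: "complex \<Rightarrow> nat \<Rightarrow> complex"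
      by (rule measurable_restrict) measurable
    have "distr M (PiM J (\<lambda>_. borel)) (\<lambda>\<omega>. \<lambda>z\<in>J. B z * GAF a \<omega> z) = distr M (PiM J (\<lambda>_. borel)) (\<lambda>\<omega>. \<lambda>z\<in>J. \<Sum>k. a k \<omega> * u z k)"
    proof (rule distr_cong_AE[OF refl refl])
      have "AE \<omega> in M. \<forall>z\<in>J. B z * GAF a \<omega> z = (\<Sum>k. a k \<omega> * u z k)"
        using J by (subst AE_finite_all) (auto intro!: AEL nU)
      then show "AE \<omega> in M. (\<lambda>z\<in>J. B z * GAF a \<omega> z) = (\<lambda>z\<in>J. \<Sum>k. a k \<omega> * u z k)"
        by eventually_elim (auto simp: restrict_def fun_eq_iff)
      show "(\<lambda>\<omega>. \<lambda>z\<in>J. B z * GAF a \<omega> z) \<in> M \<rightarrow>\<^sub>M PiM J (\<lambda>_. borel)"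
        by (rule measurable_restrict) measurable
    qed (rule mS)
    also have "\<dots> = distr M (PiM J (\<lambda>_. borel)) (\<lambda>\<omega>. \<lambda>z\<in>J. \<Sum>k. a k \<omega> * v z k)"
    proof (rule series_law[OF J(1)])
      show "\<And>w. w \<in> J \<Longrightarrow> summable (\<lambda>k. norm (u w k))" using J by (auto intro!: su nU)
      show "\<And>w. w \<in> J \<Longrightarrow> summable (\<lambda>k. norm (v w k))" using J by (auto intro!: sv nU)
      fix w w' assume "w \<in> J" "w' \<in> J"
      then have b: "w \<in> ?U" "w' \<in> ?U" using J by auto
      show "(\<Sum>k. u w k * cnj (u w' k)) = (\<Sum>k. v w k * cnj (v w' k))"
        unfolding covu[OF b] covv[OF b] ..
    qed
    also have "\<dots> = distr M (PiM J (\<lambda>_. borel)) (\<lambda>\<omega>. \<lambda>z\<in>J. g \<omega> z)"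
    proof (rule distr_cong_AE[OF refl refl])
      have "AE \<omega> in M. \<forall>z\<in>J. g \<omega> z = (\<Sum>k. a k \<omega> * v z k)"
        using J by (subst AE_finite_all) (auto intro!: AER)
      then show "AE \<omega> in M. (\<lambda>z\<in>J. \<Sum>k. a k \<omega> * v z k) = (\<lambda>z\<in>J. g \<omega> z)"
        by eventually_elim (auto simp: restrict_def fun_eq_iff)
      show "(\<lambda>\<omega>. \<lambda>z\<in>J. g \<omega> z) \<in> M \<rightarrow>\<^sub>M PiM J (\<lambda>_. borel)"
        by (rule measurable_restrict) (use J mg in auto)
    qed (rule mS)
    finally show ?thesis .
  qed
  have mL: "(\<lambda>\<omega>. \<lambda>z\<in>?U. B z * GAF a \<omega> z) \<in> M \<rightarrow>\<^sub>M PiM ?U (\<lambda>_. borel)"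
    by (rule measurable_restrict) measurable
  have mR: "(\<lambda>\<omega>. \<lambda>z\<in>?U. g \<omega> z) \<in> M \<rightarrow>\<^sub>M PiM ?U (\<lambda>_. borel)"
    by (rule measurable_restrict) (use mg in auto)
  show ?thesis
    unfolding Beq
  proof (rule measure_eqI_PiM_infinite)
    show "finite_measure (distr M (PiM ?U (\<lambda>_. borel)) (\<lambda>\<omega>. \<lambda>z\<in>?U. B z * GAF a \<omega> z))"
      by (rule finite_measure_distr[OF mL])
    fix A J assume J: "finite J" "J \<subseteq> ?U" and A: "\<And>i. i \<in> J \<Longrightarrow> A i \<in> sets (borel :: complex measure)"
    have X: "Pi\<^sub>E J A \<in> sets (PiM J (\<lambda>_. borel :: complex measure))"
      using J A by (intro sets_PiM_I_finite) auto
    show "emeasure (distr M (PiM ?U (\<lambda>_. borel)) (\<lambda>\<omega>. \<lambda>z\<in>?U. B z * GAF a \<omega> z)) (prod_emb ?U (\<lambda>_. borel) J (Pi\<^sub>E J A))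
        = emeasure (distr M (PiM ?U (\<lambda>_. borel)) (\<lambda>\<omega>. \<lambda>z\<in>?U. g \<omega> z)) (prod_emb ?U (\<lambda>_. borel) J (Pi\<^sub>E J A))"
      unfolding distr_prod_emb[OF mL J(2) X] distr_prod_emb[OF mR J(2) X] fin[OF J] ..
  qed simp_all
qed

end
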